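(* Let $(X_1,Y_1),\dots,(X_n,Y_n)$, $n\ge 2$, be i.i.d. copies of $(X,Y)$ with $X\in\mathbb{R}^p$, $Y\in\mathbb{R}$, $E(X)=0$ and $\mathrm{Var}(X)=\mathbf{I}$, and assume all moments appearing below are finite. Let $\beta=E(XY)$, $\tau^2=\|\beta\|^2$, $\alpha=E(Y)$, $\sigma_Y^2=\mathrm{Var}(Y)$, $W_i=X_iY_i$ with coordinates $W_{ij}$, $W=XY$, $\mathbf{A}=E(WW^T)$. Define $\hat\tau^2=\binom{n}{2}^{-1}\sum_{i_1<i_2}W_{i_1}^TW_{i_2}$, $\hat\sigma_Y^2=\frac{1}{n-1}\sum_{i=1}^n(Y_i-\bar Y)^2$ and $\hat\sigma^2=\hat\sigma_Y^2-\hat\tau^2$. Let $\mu_4=E[(Y-\alpha)^4]$ and $\pi=(\pi_1,\dots,\pi_p)^T$ with $\pi_j=E[(Y_1-\alpha)^2W_{1j}]$. Then $$\mathrm{Var}(\hat\sigma^2)=\Big[\frac1n\mu_4-\frac{n-3}{n(n-1)}\sigma_Y^4\Big]+\mathrm{Var}(\hat\tau^2)-\frac4n\big(\pi^T\beta-\tau^2\sigma_Y^2\big)+\frac{4}{n(n-1)}\sum_{j=1}^p\{E[W_{1j}(Y_1-\alpha)]\}^2,$$ where $\mathrm{Var}(\hat\tau^2)=\frac{4(n-2)}{n(n-1)}(\beta^T\mathbf{A}\beta-\|\beta\|^4)+\frac{2}{n(n-1)}(\|\mathbf{A}\|_F^2-\|\beta\|^4)$.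
   Context: $\beta$ and $\alpha$ are the slope and intercept of the best linear predictor of $Y$ given $X$ (under $E(X)=0$); $\hat\sigma^2$ estimates the noise level $\sigma^2=\sigma_Y^2-\tau^2$. $\|\cdot\|_F$ is the Frobenius norm. *)

theory Defs
  imports "HOL-Probability.Probability"
begin

text \<open>Observations are indexed by 0..n-1. W_i = X_i Y_i.\<close>

definition tau_hat_sq :: "nat \<Rightarrow> (nat \<Rightarrow> 'a \<Rightarrow> real^'p::finite) \<Rightarrow> (nat \<Rightarrow> 'a \<Rightarrow> real) \<Rightarrow> 'a \<Rightarrow> real" where
  "tau_hat_sq n X Y \<omega> =
     (\<Sum>i2<n. \<Sum>i1<i2. (Y i1 \<omega> *\<^sub>R X i1 \<omega>) \<bullet> (Y i2 \<omega> *\<^sub>R X i2 \<omega>)) / real (n choose 2)"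

definition sigmaY_hat_sq :: "nat \<Rightarrow> (nat \<Rightarrow> 'a \<Rightarrow> real) \<Rightarrow> 'a \<Rightarrow> real" where
  "sigmaY_hat_sq n Y \<omega> =
     (\<Sum>i<n. (Y i \<omega> - (\<Sum>k<n. Y k \<omega>) / real n)\<^sup>2) / (real n - 1)"

definition frob_norm :: "real^'p::finite^'p \<Rightarrow> real" where
  "frob_norm A = sqrt (\<Sum>j\<in>UNIV. \<Sum>k\<in>UNIV. (A $ j $ k)\<^sup>2)"

definition var :: "'a measure \<Rightarrow> ('a \<Rightarrow> real) \<Rightarrow> real" where
  "var M f = (LINT \<omega>|M. (f \<omega> - (LINT \<omega>'|M. f \<omega>'))\<^sup>2)"

end

theory Submission
  imports Defs "HOL-Probability.Probability"
begin

lemma (in prob_space) sq_int_mult: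
  fixes a b :: "'a \<Rightarrow> real"
  assumes "a \<in> borel_measurable M" "b \<in> borel_measurable M"
    "integrable M (\<lambda>x. (a x)\<^sup>2)" "integrable M (\<lambda>x. (b x)\<^sup>2)"
  shows "integrable M (\<lambda>x. a x * b x)"
proof (rule Bochner_Integration.integrable_bound)
  show "integrable M (\<lambda>x. (a x)\<^sup>2 + (b x)\<^sup>2)" using assms by auto
  show "(\<lambda>x. a x * b x) \<in> borel_measurable M" using assms by auto
  show "AE x in M. norm (a x * b x) \<le> norm ((a x)\<^sup>2 + (b x)\<^sup>2)"
  proof (intro AE_I2)
    fix x
    have "0 \<le> (\<bar>a x\<bar> - \<bar>b x\<bar>)\<^sup>2" by simp
    hence h: "2*(\<bar>a x\<bar> * \<bar>b x\<bar>) \<le> (a x)\<^sup>2 + (b x)\<^sup>2"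
      by (simp add: power2_eq_square algebra_simps)
    have "0 \<le> \<bar>a x\<bar> * \<bar>b x\<bar>" by simp
    hence "\<bar>a x * b x\<bar> \<le> (a x)\<^sup>2 + (b x)\<^sup>2" using h by (simp only: abs_mult)
    thus "norm (a x * b x) \<le> norm ((a x)\<^sup>2 + (b x)\<^sup>2)" by simp
  qed
qed

lemma (in prob_space) sq_int:
  fixes a :: "'a \<Rightarrow> real"
  assumes "a \<in> borel_measurable M" "integrable M (\<lambda>x. (a x)\<^sup>2)"
  shows "integrable M a"
  using sq_int_mult[OF assms(1) borel_measurable_const assms(2), of 1] by simp

locale iidZ = prob_space M for M :: "'a measure" +
  fixes Z :: "nat \<Rightarrow> 'a \<Rightarrow> 't::topological_space" and n :: nat
  assumes Zm: "\<And>i. i < n \<Longrightarrow> Z i \<in> borel_measurable M"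
    and ind: "indep_vars (\<lambda>_. borel) Z {..<n}"
    and idd: "\<And>i. i < n \<Longrightarrow> distr M borel (Z i) = distr M borel (Z 0)"
    and n2: "2 \<le> n"
begin

lemma Z0m: "Z 0 \<in> borel_measurable M" using Zm n2 by auto

lemma E_same_int:
  fixes \<phi> :: "'t \<Rightarrow> real"
  assumes "i < n" "\<phi> \<in> borel_measurable borel"
  shows "integrable M (\<lambda>\<omega>. \<phi> (Z i \<omega>)) \<longleftrightarrow> integrable M (\<lambda>\<omega>. \<phi> (Z 0 \<omega>))"
  using integrable_distr_eq[OF Zm[OF assms(1)] assms(2)] integrable_distr_eq[OF Z0m assms(2)]
    idd[OF assms(1)] by simp

lemma E_same:
  fixes \<phi> :: "'t \<Rightarrow> real"
  assumes "i < n" "\<phi> \<in> borel_measurable borel"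
  shows "(LINT \<omega>|M. \<phi> (Z i \<omega>)) = (LINT \<omega>|M. \<phi> (Z 0 \<omega>))"
  using integral_distr[OF Zm[OF assms(1)] assms(2)] integral_distr[OF Z0m assms(2)]
    idd[OF assms(1)] by simp

lemma E_prod:
  fixes \<phi> :: "nat \<Rightarrow> 't \<Rightarrow> real"
  assumes I: "I \<subseteq> {..<n}" and m: "\<And>k. k \<in> I \<Longrightarrow> \<phi> k \<in> borel_measurable borel"
    and int: "\<And>k. k \<in> I \<Longrightarrow> integrable M (\<lambda>\<omega>. \<phi> k (Z 0 \<omega>))"
  shows "integrable M (\<lambda>\<omega>. \<Prod>k\<in>I. \<phi> k (Z k \<omega>))"
    and "(LINT \<omega>|M. (\<Prod>k\<in>I. \<phi> k (Z k \<omega>))) = (\<Prod>k\<in>I. (LINT \<omega>|M. \<phi> k (Z 0 \<omega>)))"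
proof -
  have fin: "finite I" using I finite_subset by blast
  have iv: "indep_vars (\<lambda>_. borel) (\<lambda>k \<omega>. \<phi> k (Z k \<omega>)) I"
    by (rule indep_vars_compose2[OF indep_vars_subset[OF ind I]]) (use m in auto)
  have ik: "integrable M (\<lambda>\<omega>. \<phi> k (Z k \<omega>))" if "k \<in> I" for k
    using E_same_int[of k "\<phi> k"] that I m int by auto
  show "integrable M (\<lambda>\<omega>. \<Prod>k\<in>I. \<phi> k (Z k \<omega>))"
    by (rule indep_vars_integrable[OF fin iv ik])
  have "(LINT \<omega>|M. (\<Prod>k\<in>I. \<phi> k (Z k \<omega>))) = (\<Prod>k\<in>I. (LINT \<omega>|M. \<phi> k (Z k \<omega>)))"
    by (rule indep_vars_lebesgue_integral[OF fin iv ik])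
  also have "\<dots> = (\<Prod>k\<in>I. (LINT \<omega>|M. \<phi> k (Z 0 \<omega>)))"
    by (intro prod.cong refl E_same) (use I m in auto)
  finally show "(LINT \<omega>|M. (\<Prod>k\<in>I. \<phi> k (Z k \<omega>))) = (\<Prod>k\<in>I. (LINT \<omega>|M. \<phi> k (Z 0 \<omega>)))" .
qed

end

lemma inner_count:
  fixes a b c :: real
  assumes "i \<noteq> j" "i < n" "j < n"
  shows "(\<Sum>k<n. \<Sum>l\<in>{..<n}-{k}. (if {i,j} = {k,l} then a else if k \<in> {i,j} \<or> l \<in> {i,j} then b else c))
        = 2*a + 4*(real n - 2)*b + (real n - 2)*(real n - 3)*c"
proof -
  define Rs where "Rs = {..<n} - {i,j}"
  define F where "F k = (\<Sum>l\<in>{..<n}-{k}. (if {i,j} = {k,l} then a else if k \<in> {i,j} \<or> l \<in> {i,j} then b else c))" for k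
  have finRs: "finite Rs" unfolding Rs_def by auto
  have cardRs: "card Rs = n - 2" unfolding Rs_def using assms by (subst card_Diff_subset) auto
  have U: "{..<n} = insert i (insert j Rs)" unfolding Rs_def using assms by auto
  have Fi: "F i = a + real (card Rs) * b"
  proof -
    have "{..<n}-{i} = insert j Rs" unfolding Rs_def using assms by auto
    hence "F i = (\<Sum>l\<in>insert j Rs. (if {i,j} = {i,l} then a else if i \<in> {i,j} \<or> l \<in> {i,j} then b else c))"
      unfolding F_def by simp
    also have "\<dots> = a + (\<Sum>l\<in>Rs. b)"
      using finRs assms by (subst sum.insert) (auto simp: Rs_def doubleton_eq_iff intro!: sum.cong)
    finally show ?thesis by simp
  qed
  have Fj: "F j = a + real (card Rs) * b"
  proof -
    have "{..<n}-{j} = insert i Rs" unfolding Rs_def using assms by auto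
    hence "F j = (\<Sum>l\<in>insert i Rs. (if {i,j} = {j,l} then a else if j \<in> {i,j} \<or> l \<in> {i,j} then b else c))"
      unfolding F_def by simp
    also have "\<dots> = a + (\<Sum>l\<in>Rs. b)"
      using finRs assms by (subst sum.insert) (auto simp: Rs_def doubleton_eq_iff intro!: sum.cong)
    finally show ?thesis by simp
  qed
  have Fk: "F k = 2*b + (real (card Rs) - 1) * c" if k: "k \<in> Rs" for k
  proof -
    have "{..<n}-{k} = insert i (insert j (Rs - {k}))" using k unfolding Rs_def using assms by auto
    hence "F k = (\<Sum>l\<in>insert i (insert j (Rs - {k})). (if {i,j} = {k,l} then a else if k \<in> {i,j} \<or> l \<in> {i,j} then b else c))"
      unfolding F_def by simp
    also have "\<dots> = b + b + (\<Sum>l\<in>Rs-{k}. c)"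
      using finRs assms k by (subst sum.insert; auto simp: Rs_def doubleton_eq_iff intro!: sum.cong)+
    also have "card (Rs - {k}) = card Rs - 1" using k finRs by simp
    moreover have "card Rs \<ge> 1" using k finRs by (metis One_nat_def Suc_leI card_gt_0_iff empty_iff)
    ultimately show ?thesis by (simp add: of_nat_diff)
  qed
  have "(\<Sum>k<n. F k) = F i + F j + (\<Sum>k\<in>Rs. F k)"
    unfolding U using finRs assms by (simp add: Rs_def)
  also have "(\<Sum>k\<in>Rs. F k) = real (card Rs) * (2*b + (real (card Rs) - 1) * c)"
    using Fk by simp
  finally have "(\<Sum>k<n. F k) = 2*a + 2 * real (card Rs) * b + real (card Rs) * (2*b + (real (card Rs) - 1) * c)"
    using Fi Fj by simp
  moreover have "real (card Rs) = real n - 2" using cardRs assms by (simp add: of_nat_diff)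
  ultimately show ?thesis unfolding F_def by (simp add: algebra_simps)
qed




locale ustat = iidZ M Z n for M :: "'a measure" and Z :: "nat \<Rightarrow> 'a \<Rightarrow> 't::topological_space" and n +
  fixes R :: "'r set" and f g :: "'r \<Rightarrow> 't \<Rightarrow> real"
  assumes finR: "finite R"
    and fm: "\<And>r. r \<in> R \<Longrightarrow> f r \<in> borel_measurable borel"
    and gm: "\<And>r. r \<in> R \<Longrightarrow> g r \<in> borel_measurable borel"
    and fsq: "\<And>r. r \<in> R \<Longrightarrow> integrable M (\<lambda>\<omega>. (f r (Z 0 \<omega>))\<^sup>2)"
    and gsq: "\<And>r. r \<in> R \<Longrightarrow> integrable M (\<lambda>\<omega>. (g r (Z 0 \<omega>))\<^sup>2)"
    and symK: "\<And>a b. (\<Sum>r\<in>R. f r a * g r b) = (\<Sum>r\<in>R. f r b * g r a)"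
begin

definition K where "K a b = (\<Sum>r\<in>R. f r a * g r b)"
definition Ef :: "('t \<Rightarrow> real) \<Rightarrow> real" where "Ef \<phi> = (LINT \<omega>|M. \<phi> (Z 0 \<omega>))"
definition mu where "mu = (\<Sum>r\<in>R. Ef (f r) * Ef (g r))"
definition m1 where "m1 = (\<Sum>r\<in>R. \<Sum>s\<in>R. Ef (\<lambda>a. f r a * f s a) * Ef (g r) * Ef (g s))"
definition m2 where "m2 = (\<Sum>r\<in>R. \<Sum>s\<in>R. Ef (\<lambda>a. f r a * f s a) * Ef (\<lambda>a. g r a * g s a))"

lemma KZm: "i < n \<Longrightarrow> j < n \<Longrightarrow> (\<lambda>\<omega>. K (Z i \<omega>) (Z j \<omega>)) \<in> borel_measurable M"
  unfolding K_def
  by (intro borel_measurable_sum borel_measurable_times measurable_compose[OF Zm fm] measurable_compose[OF Zm gm]) auto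

lemma symK': "K a b = K b a" unfolding K_def by (rule symK)

lemma int_f: "r \<in> R \<Longrightarrow> integrable M (\<lambda>\<omega>. f r (Z 0 \<omega>))"
  by (rule sq_int[OF _ fsq]) (auto intro: measurable_compose[OF Z0m fm])
lemma int_g: "r \<in> R \<Longrightarrow> integrable M (\<lambda>\<omega>. g r (Z 0 \<omega>))"
  by (rule sq_int[OF _ gsq]) (auto intro: measurable_compose[OF Z0m gm])
lemma int_ff: "r \<in> R \<Longrightarrow> s \<in> R \<Longrightarrow> integrable M (\<lambda>\<omega>. f r (Z 0 \<omega>) * f s (Z 0 \<omega>))"
  by (rule sq_int_mult[OF _ _ fsq fsq]) (auto intro: measurable_compose[OF Z0m fm])
lemma int_gg: "r \<in> R \<Longrightarrow> s \<in> R \<Longrightarrow> integrable M (\<lambda>\<omega>. g r (Z 0 \<omega>) * g s (Z 0 \<omega>))"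
  by (rule sq_int_mult[OF _ _ gsq gsq]) (auto intro: measurable_compose[OF Z0m gm])

end
context iidZ begin

lemma E2:
  fixes F G :: "'t \<Rightarrow> real"
  assumes "i \<noteq> j" "i<n" "j<n" "F \<in> borel_measurable borel" "G \<in> borel_measurable borel"
   "integrable M (\<lambda>\<omega>. F (Z 0 \<omega>))" "integrable M (\<lambda>\<omega>. G (Z 0 \<omega>))"
  shows "integrable M (\<lambda>\<omega>. F (Z i \<omega>) * G (Z j \<omega>))"
    "(LINT \<omega>|M. F (Z i \<omega>) * G (Z j \<omega>)) = (LINT \<omega>|M. F (Z 0 \<omega>)) * (LINT \<omega>|M. G (Z 0 \<omega>))"
proof -
  define \<phi> where "\<phi> k = (if k = i then F else G)" for k
  have eq: "(\<lambda>\<omega>. \<Prod>k\<in>{i,j}. \<phi> k (Z k \<omega>)) = (\<lambda>\<omega>. F (Z i \<omega>) * G (Z j \<omega>))"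
    using assms by (simp add: \<phi>_def)
  have eq2: "(\<Prod>k\<in>{i,j}. (LINT \<omega>|M. \<phi> k (Z 0 \<omega>))) = (LINT \<omega>|M. F (Z 0 \<omega>)) * (LINT \<omega>|M. G (Z 0 \<omega>))"
    using assms by (simp add: \<phi>_def)
  have h: "{i,j} \<subseteq> {..<n}" using assms by auto
  have m: "\<And>k. k \<in> {i,j} \<Longrightarrow> \<phi> k \<in> borel_measurable borel" using assms by (auto simp: \<phi>_def)
  have it: "\<And>k. k \<in> {i,j} \<Longrightarrow> integrable M (\<lambda>\<omega>. \<phi> k (Z 0 \<omega>))" using assms by (auto simp: \<phi>_def)
  show "integrable M (\<lambda>\<omega>. F (Z i \<omega>) * G (Z j \<omega>))"
    using E_prod(1)[of _ \<phi>, OF h m it] unfolding eq .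
  show "(LINT \<omega>|M. F (Z i \<omega>) * G (Z j \<omega>)) = (LINT \<omega>|M. F (Z 0 \<omega>)) * (LINT \<omega>|M. G (Z 0 \<omega>))"
    using E_prod(2)[of _ \<phi>, OF h m it] unfolding eq eq2 .
qed

lemma E3:
  fixes F G H :: "'t \<Rightarrow> real"
  assumes "i \<noteq> j" "i \<noteq> l" "j \<noteq> l" "i<n" "j<n" "l<n"
   "F \<in> borel_measurable borel" "G \<in> borel_measurable borel" "H \<in> borel_measurable borel"
   "integrable M (\<lambda>\<omega>. F (Z 0 \<omega>))" "integrable M (\<lambda>\<omega>. G (Z 0 \<omega>))" "integrable M (\<lambda>\<omega>. H (Z 0 \<omega>))"
  shows "integrable M (\<lambda>\<omega>. F (Z i \<omega>) * G (Z j \<omega>) * H (Z l \<omega>))"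
    "(LINT \<omega>|M. F (Z i \<omega>) * G (Z j \<omega>) * H (Z l \<omega>)) = (LINT \<omega>|M. F (Z 0 \<omega>)) * (LINT \<omega>|M. G (Z 0 \<omega>)) * (LINT \<omega>|M. H (Z 0 \<omega>))"
proof -
  define \<phi> where "\<phi> k = (if k = i then F else if k = j then G else H)" for k
  have eq: "(\<lambda>\<omega>. \<Prod>k\<in>{i,j,l}. \<phi> k (Z k \<omega>)) = (\<lambda>\<omega>. F (Z i \<omega>) * G (Z j \<omega>) * H (Z l \<omega>))"
    using assms by (simp add: \<phi>_def mult.assoc)
  have eq2: "(\<Prod>k\<in>{i,j,l}. (LINT \<omega>|M. \<phi> k (Z 0 \<omega>))) = (LINT \<omega>|M. F (Z 0 \<omega>)) * (LINT \<omega>|M. G (Z 0 \<omega>)) * (LINT \<omega>|M. H (Z 0 \<omega>))"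
    using assms by (simp add: \<phi>_def mult.assoc)
  have h: "{i,j,l} \<subseteq> {..<n}" using assms by auto
  have m: "\<And>k. k \<in> {i,j,l} \<Longrightarrow> \<phi> k \<in> borel_measurable borel" using assms by (auto simp: \<phi>_def)
  have it: "\<And>k. k \<in> {i,j,l} \<Longrightarrow> integrable M (\<lambda>\<omega>. \<phi> k (Z 0 \<omega>))" using assms by (auto simp: \<phi>_def)
  show "integrable M (\<lambda>\<omega>. F (Z i \<omega>) * G (Z j \<omega>) * H (Z l \<omega>))"
    using E_prod(1)[of _ \<phi>, OF h m it] unfolding eq .
  show "(LINT \<omega>|M. F (Z i \<omega>) * G (Z j \<omega>) * H (Z l \<omega>)) = (LINT \<omega>|M. F (Z 0 \<omega>)) * (LINT \<omega>|M. G (Z 0 \<omega>)) * (LINT \<omega>|M. H (Z 0 \<omega>))"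
    using E_prod(2)[of _ \<phi>, OF h m it] unfolding eq eq2 .
qed

lemma E4:
  fixes F G H J :: "'t \<Rightarrow> real"
  assumes "i \<noteq> j" "i \<noteq> k" "i \<noteq> l" "j \<noteq> k" "j \<noteq> l" "k \<noteq> l" "i<n" "j<n" "k<n" "l<n"
   "F \<in> borel_measurable borel" "G \<in> borel_measurable borel" "H \<in> borel_measurable borel" "J \<in> borel_measurable borel"
   "integrable M (\<lambda>\<omega>. F (Z 0 \<omega>))" "integrable M (\<lambda>\<omega>. G (Z 0 \<omega>))" "integrable M (\<lambda>\<omega>. H (Z 0 \<omega>))"
   "integrable M (\<lambda>\<omega>. J (Z 0 \<omega>))"
  shows "integrable M (\<lambda>\<omega>. F (Z i \<omega>) * G (Z j \<omega>) * (H (Z k \<omega>) * J (Z l \<omega>)))"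
    "(LINT \<omega>|M. F (Z i \<omega>) * G (Z j \<omega>) * (H (Z k \<omega>) * J (Z l \<omega>))) = (LINT \<omega>|M. F (Z 0 \<omega>)) * (LINT \<omega>|M. G (Z 0 \<omega>)) * ((LINT \<omega>|M. H (Z 0 \<omega>)) * (LINT \<omega>|M. J (Z 0 \<omega>)))"
proof -
  define \<phi> where "\<phi> m = (if m = i then F else if m = j then G else if m = k then H else J)" for m
  have eq: "(\<lambda>\<omega>. \<Prod>m\<in>{i,j,k,l}. \<phi> m (Z m \<omega>)) = (\<lambda>\<omega>. F (Z i \<omega>) * G (Z j \<omega>) * (H (Z k \<omega>) * J (Z l \<omega>)))"
    using assms by (simp add: \<phi>_def mult.assoc)
  have eq2: "(\<Prod>m\<in>{i,j,k,l}. (LINT \<omega>|M. \<phi> m (Z 0 \<omega>))) = (LINT \<omega>|M. F (Z 0 \<omega>)) * (LINT \<omega>|M. G (Z 0 \<omega>)) * ((LINT \<omega>|M. H (Z 0 \<omega>)) * (LINT \<omega>|M. J (Z 0 \<omega>)))"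
    using assms by (simp add: \<phi>_def mult.assoc)
  have h: "{i,j,k,l} \<subseteq> {..<n}" using assms by auto
  have m: "\<And>m. m \<in> {i,j,k,l} \<Longrightarrow> \<phi> m \<in> borel_measurable borel" using assms by (auto simp: \<phi>_def)
  have it: "\<And>m. m \<in> {i,j,k,l} \<Longrightarrow> integrable M (\<lambda>\<omega>. \<phi> m (Z 0 \<omega>))" using assms by (auto simp: \<phi>_def)
  show "integrable M (\<lambda>\<omega>. F (Z i \<omega>) * G (Z j \<omega>) * (H (Z k \<omega>) * J (Z l \<omega>)))"
    using E_prod(1)[of _ \<phi>, OF h m it] unfolding eq .
  show "(LINT \<omega>|M. F (Z i \<omega>) * G (Z j \<omega>) * (H (Z k \<omega>) * J (Z l \<omega>))) = (LINT \<omega>|M. F (Z 0 \<omega>)) * (LINT \<omega>|M. G (Z 0 \<omega>)) * ((LINT \<omega>|M. H (Z 0 \<omega>)) * (LINT \<omega>|M. J (Z 0 \<omega>)))"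
    using E_prod(2)[of _ \<phi>, OF h m it] unfolding eq eq2 .
qed

end

lemma (in prob_space) dsum_int:
  fixes h :: "'r \<Rightarrow> 'r \<Rightarrow> 'a \<Rightarrow> real"
  assumes "finite R" "\<And>r s. r \<in> R \<Longrightarrow> s \<in> R \<Longrightarrow> integrable M (h r s)"
  shows "integrable M (\<lambda>\<omega>. \<Sum>r\<in>R. \<Sum>s\<in>R. h r s \<omega>)"
    "(LINT \<omega>|M. (\<Sum>r\<in>R. \<Sum>s\<in>R. h r s \<omega>)) = (\<Sum>r\<in>R. \<Sum>s\<in>R. LINT \<omega>|M. h r s \<omega>)"
  using assms by (auto intro!: integrable_sum simp: integral_sum)

context ustat begin

lemma ffm: "r \<in> R \<Longrightarrow> s \<in> R \<Longrightarrow> (\<lambda>a. f r a * f s a) \<in> borel_measurable borel"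
  using fm by (intro borel_measurable_times) auto
lemma ggm: "r \<in> R \<Longrightarrow> s \<in> R \<Longrightarrow> (\<lambda>a. g r a * g s a) \<in> borel_measurable borel"
  using gm by (intro borel_measurable_times) auto

lemma K_int:
  assumes "i \<noteq> j" "i < n" "j < n"
  shows "integrable M (\<lambda>\<omega>. K (Z i \<omega>) (Z j \<omega>))" "(LINT \<omega>|M. K (Z i \<omega>) (Z j \<omega>)) = mu"
proof -
  have i: "integrable M (\<lambda>\<omega>. f r (Z i \<omega>) * g r (Z j \<omega>))" if "r \<in> R" for r
    using E2(1)[OF assms fm gm int_f int_g] that by auto
  show "integrable M (\<lambda>\<omega>. K (Z i \<omega>) (Z j \<omega>))" unfolding K_def using i by auto
  have "(LINT \<omega>|M. K (Z i \<omega>) (Z j \<omega>)) = (\<Sum>r\<in>R. LINT \<omega>|M. f r (Z i \<omega>) * g r (Z j \<omega>))"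
    unfolding K_def using i by (simp add: integral_sum)
  also have "\<dots> = mu" unfolding mu_def Ef_def
    by (intro sum.cong refl E2(2)[OF assms fm gm int_f int_g])
  finally show "(LINT \<omega>|M. K (Z i \<omega>) (Z j \<omega>)) = mu" .
qed

lemma K_sq:
  assumes "i \<noteq> j" "i < n" "j < n"
  shows "integrable M (\<lambda>\<omega>. K (Z i \<omega>) (Z j \<omega>) * K (Z i \<omega>) (Z j \<omega>))"
    "(LINT \<omega>|M. K (Z i \<omega>) (Z j \<omega>) * K (Z i \<omega>) (Z j \<omega>)) = m2"
proof -
  have eq: "K a b * K a b = (\<Sum>r\<in>R. \<Sum>s\<in>R. (f r a * f s a) * (g r b * g s b))" for a b
    unfolding K_def sum_product by (intro sum.cong refl) (simp add: ac_simps)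
  have i: "integrable M (\<lambda>\<omega>. (f r (Z i \<omega>) * f s (Z i \<omega>)) * (g r (Z j \<omega>) * g s (Z j \<omega>)))"
    if "r \<in> R" "s \<in> R" for r s
    using E2(1)[OF assms ffm ggm int_ff int_gg] that by auto
  show "integrable M (\<lambda>\<omega>. K (Z i \<omega>) (Z j \<omega>) * K (Z i \<omega>) (Z j \<omega>))"
    unfolding eq by (rule dsum_int(1)[OF finR i])
  have "(LINT \<omega>|M. K (Z i \<omega>) (Z j \<omega>) * K (Z i \<omega>) (Z j \<omega>)) = (\<Sum>r\<in>R. \<Sum>s\<in>R. LINT \<omega>|M. (f r (Z i \<omega>) * f s (Z i \<omega>)) * (g r (Z j \<omega>) * g s (Z j \<omega>)))"
    unfolding eq by (rule dsum_int(2)[OF finR i])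
  also have "\<dots> = m2" unfolding m2_def Ef_def
    by (intro sum.cong refl E2(2)[OF assms ffm ggm int_ff int_gg])
  finally show "(LINT \<omega>|M. K (Z i \<omega>) (Z j \<omega>) * K (Z i \<omega>) (Z j \<omega>)) = m2" .
qed

lemma K_3:
  assumes "i \<noteq> j" "i \<noteq> l" "j \<noteq> l" "i < n" "j < n" "l < n"
  shows "integrable M (\<lambda>\<omega>. K (Z i \<omega>) (Z j \<omega>) * K (Z i \<omega>) (Z l \<omega>))"
    "(LINT \<omega>|M. K (Z i \<omega>) (Z j \<omega>) * K (Z i \<omega>) (Z l \<omega>)) = m1"
proof -
  have eq: "K a b * K a c = (\<Sum>r\<in>R. \<Sum>s\<in>R. (f r a * f s a) * g r b * g s c)" for a b c
    unfolding K_def sum_product by (intro sum.cong refl) (simp add: ac_simps)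
  have i: "integrable M (\<lambda>\<omega>. (f r (Z i \<omega>) * f s (Z i \<omega>)) * g r (Z j \<omega>) * g s (Z l \<omega>))"
    if "r \<in> R" "s \<in> R" for r s
    using E3(1)[OF assms ffm gm gm int_ff int_g int_g] that by auto
  show "integrable M (\<lambda>\<omega>. K (Z i \<omega>) (Z j \<omega>) * K (Z i \<omega>) (Z l \<omega>))"
    unfolding eq by (rule dsum_int(1)[OF finR i])
  have "(LINT \<omega>|M. K (Z i \<omega>) (Z j \<omega>) * K (Z i \<omega>) (Z l \<omega>)) = (\<Sum>r\<in>R. \<Sum>s\<in>R. LINT \<omega>|M. (f r (Z i \<omega>) * f s (Z i \<omega>)) * g r (Z j \<omega>) * g s (Z l \<omega>))"
    unfolding eq by (rule dsum_int(2)[OF finR i])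
  also have "\<dots> = m1" unfolding m1_def Ef_def
    by (intro sum.cong refl E3(2)[OF assms ffm gm gm int_ff int_g int_g])
  finally show "(LINT \<omega>|M. K (Z i \<omega>) (Z j \<omega>) * K (Z i \<omega>) (Z l \<omega>)) = m1" .
qed

lemma K_4:
  assumes "i \<noteq> j" "i \<noteq> k" "i \<noteq> l" "j \<noteq> k" "j \<noteq> l" "k \<noteq> l" "i<n" "j<n" "k<n" "l<n"
  shows "integrable M (\<lambda>\<omega>. K (Z i \<omega>) (Z j \<omega>) * K (Z k \<omega>) (Z l \<omega>))"
    "(LINT \<omega>|M. K (Z i \<omega>) (Z j \<omega>) * K (Z k \<omega>) (Z l \<omega>)) = mu * mu"
proof -
  have eq: "K a b * K c d = (\<Sum>r\<in>R. \<Sum>s\<in>R. f r a * g r b * (f s c * g s d))" for a b c d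
    unfolding K_def sum_product ..
  have i: "integrable M (\<lambda>\<omega>. f r (Z i \<omega>) * g r (Z j \<omega>) * (f s (Z k \<omega>) * g s (Z l \<omega>)))"
    if "r \<in> R" "s \<in> R" for r s
    using E4(1)[OF assms fm gm fm gm int_f int_g int_f int_g] that by auto
  show "integrable M (\<lambda>\<omega>. K (Z i \<omega>) (Z j \<omega>) * K (Z k \<omega>) (Z l \<omega>))"
    unfolding eq by (rule dsum_int(1)[OF finR i])
  have "(LINT \<omega>|M. K (Z i \<omega>) (Z j \<omega>) * K (Z k \<omega>) (Z l \<omega>)) = (\<Sum>r\<in>R. \<Sum>s\<in>R. LINT \<omega>|M. f r (Z i \<omega>) * g r (Z j \<omega>) * (f s (Z k \<omega>) * g s (Z l \<omega>)))"
    unfolding eq by (rule dsum_int(2)[OF finR i])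
  also have "\<dots> = (\<Sum>r\<in>R. \<Sum>s\<in>R. Ef (f r) * Ef (g r) * (Ef (f s) * Ef (g s)))" unfolding Ef_def
    by (intro sum.cong refl E4(2)[OF assms fm gm fm gm int_f int_g int_f int_g])
  also have "\<dots> = mu * mu" unfolding mu_def sum_product ..
  finally show "(LINT \<omega>|M. K (Z i \<omega>) (Z j \<omega>) * K (Z k \<omega>) (Z l \<omega>)) = mu * mu" .
qed

end

lemma (in prob_space) var_eq:
  fixes f :: "'a \<Rightarrow> real"
  assumes "integrable M f" "integrable M (\<lambda>x. f x * f x)"
  shows "var M f = (LINT x|M. f x * f x) - (LINT x|M. f x) * (LINT x|M. f x)"
proof -
  define c where "c = (LINT x|M. f x)"
  have "var M f = (LINT x|M. f x * f x - 2 * c * f x + c * c)"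
    unfolding var_def c_def[symmetric] by (intro Bochner_Integration.integral_cong) (auto simp: power2_eq_square algebra_simps)
  also have "\<dots> = (LINT x|M. f x * f x) - 2 * c * c + c * c"
    using assms by (simp add: c_def prob_space)
  finally show ?thesis unfolding c_def by simp
qed

lemma sum4_prod:
  fixes a :: "nat \<Rightarrow> nat \<Rightarrow> real"
  shows "(\<Sum>i\<in>A. \<Sum>j\<in>B i. a i j) * (\<Sum>k\<in>A. \<Sum>l\<in>B k. a k l) = (\<Sum>i\<in>A. \<Sum>j\<in>B i. \<Sum>k\<in>A. \<Sum>l\<in>B k. a i j * a k l)"
  unfolding sum_distrib_right unfolding sum_distrib_left ..

lemma (in prob_space) int_sum2:
  fixes h :: "'i \<Rightarrow> 'j \<Rightarrow> 'a \<Rightarrow> real"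
  assumes "finite A" "\<And>i. i \<in> A \<Longrightarrow> finite (B i)"
    "\<And>i j. i \<in> A \<Longrightarrow> j \<in> B i \<Longrightarrow> integrable M (h i j)"
  shows "integrable M (\<lambda>\<omega>. \<Sum>i\<in>A. \<Sum>j\<in>B i. h i j \<omega>)"
    "(LINT \<omega>|M. (\<Sum>i\<in>A. \<Sum>j\<in>B i. h i j \<omega>)) = (\<Sum>i\<in>A. \<Sum>j\<in>B i. LINT \<omega>|M. h i j \<omega>)"
proof -
  have ii: "integrable M (\<lambda>\<omega>. \<Sum>j\<in>B i. h i j \<omega>)" if "i \<in> A" for i
    by (rule Bochner_Integration.integrable_sum) (use assms that in auto)
  show "integrable M (\<lambda>\<omega>. \<Sum>i\<in>A. \<Sum>j\<in>B i. h i j \<omega>)" by (rule Bochner_Integration.integrable_sum) (use ii in auto)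
  have "(LINT \<omega>|M. (\<Sum>i\<in>A. \<Sum>j\<in>B i. h i j \<omega>)) = (\<Sum>i\<in>A. LINT \<omega>|M. (\<Sum>j\<in>B i. h i j \<omega>))"
    by (rule Bochner_Integration.integral_sum) (use ii in auto)
  also have "\<dots> = (\<Sum>i\<in>A. \<Sum>j\<in>B i. LINT \<omega>|M. h i j \<omega>)"
    using assms by (intro sum.cong refl Bochner_Integration.integral_sum) auto
  finally show "(LINT \<omega>|M. (\<Sum>i\<in>A. \<Sum>j\<in>B i. h i j \<omega>)) = (\<Sum>i\<in>A. \<Sum>j\<in>B i. LINT \<omega>|M. h i j \<omega>)" .
qed

context ustat begin

definition Tv where "Tv i j k l = (if {i,j} = {k,l} then m2 else if k \<in> {i,j} \<or> l \<in> {i,j} then m1 else mu * mu)"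

lemma T_val:
  assumes "i \<noteq> j" "k \<noteq> l" "i < n" "j < n" "k < n" "l < n"
  shows "integrable M (\<lambda>\<omega>. K (Z i \<omega>) (Z j \<omega>) * K (Z k \<omega>) (Z l \<omega>))"
    "(LINT \<omega>|M. K (Z i \<omega>) (Z j \<omega>) * K (Z k \<omega>) (Z l \<omega>)) = Tv i j k l"
proof -
  show "integrable M (\<lambda>\<omega>. K (Z i \<omega>) (Z j \<omega>) * K (Z k \<omega>) (Z l \<omega>))"
    using sq_int_mult[OF KZm[of i j] KZm[of k l]] K_sq(1)[of i j] K_sq(1)[of k l] assms
    by (simp add: power2_eq_square)
  show "(LINT \<omega>|M. K (Z i \<omega>) (Z j \<omega>) * K (Z k \<omega>) (Z l \<omega>)) = Tv i j k l"
  proof (cases "{i,j} = {k,l}")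
    case True
    hence "(\<lambda>\<omega>. K (Z i \<omega>) (Z j \<omega>) * K (Z k \<omega>) (Z l \<omega>)) = (\<lambda>\<omega>. K (Z i \<omega>) (Z j \<omega>) * K (Z i \<omega>) (Z j \<omega>))"
      by (auto simp: doubleton_eq_iff intro!: ext) (metis symK')
    thus ?thesis using K_sq(2)[of i j] assms True by (simp add: Tv_def)
  next
    case F: False
    show ?thesis
    proof (cases "k \<in> {i,j} \<or> l \<in> {i,j}")
      case False
      thus ?thesis using K_4(2)[of i j k l] assms F by (auto simp: Tv_def)
    next
      case True
      hence v: "Tv i j k l = m1" using F by (simp add: Tv_def)
      have s1: "K (Z i \<omega>) (Z j \<omega>) = K (Z j \<omega>) (Z i \<omega>)" for \<omega> by (rule symK')
      have s2: "K (Z k \<omega>) (Z l \<omega>) = K (Z l \<omega>) (Z k \<omega>)" for \<omega> by (rule symK')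
      consider "k = i" | "k = j" | "l = i" | "l = j" using True by auto
      thus ?thesis
      proof cases
        case 1
        thus ?thesis using K_3(2)[of i j l] assms F v by (auto simp: doubleton_eq_iff)
      next
        case 2
        thus ?thesis using K_3(2)[of j i l] assms F v s1 by (auto simp: doubleton_eq_iff)
      next
        case 3
        thus ?thesis using K_3(2)[of i j k] assms F v s2 by (auto simp: doubleton_eq_iff)
      next
        case 4
        thus ?thesis using K_3(2)[of j i k] assms F v s1 s2 by (auto simp: doubleton_eq_iff)
      qed
    qed
  qed
qed

definition S where "S \<omega> = (\<Sum>i<n. \<Sum>j\<in>{..<n}-{i}. K (Z i \<omega>) (Z j \<omega>))"

lemma card_minus: "i < n \<Longrightarrow> card ({..<n} - {i}) = n - 1" by simp

lemma ES: "integrable M S" "(LINT \<omega>|M. S \<omega>) = real n * (real n - 1) * mu"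
proof -
  have ii: "\<And>i j. i \<in> {..<n} \<Longrightarrow> j \<in> {..<n}-{i} \<Longrightarrow> integrable M (\<lambda>\<omega>. K (Z i \<omega>) (Z j \<omega>))"
    by (rule K_int(1)) auto
  show "integrable M S" unfolding S_def by (rule int_sum2(1)[OF _ _ ii]) auto
  have "(LINT \<omega>|M. S \<omega>) = (\<Sum>i<n. \<Sum>j\<in>{..<n}-{i}. LINT \<omega>|M. K (Z i \<omega>) (Z j \<omega>))"
    unfolding S_def by (rule int_sum2(2)[OF _ _ ii]) auto
  also have "\<dots> = (\<Sum>i<n. \<Sum>j\<in>{..<n}-{i}. mu)"
    by (intro sum.cong refl K_int(2)) auto
  also have "\<dots> = (\<Sum>i<n. (real n - 1) * mu)"
    using n2 by (intro sum.cong refl) (simp add: of_nat_diff)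
  finally show "(LINT \<omega>|M. S \<omega>) = real n * (real n - 1) * mu" by simp
qed

lemma ES2: "integrable M (\<lambda>\<omega>. S \<omega> * S \<omega>)"
  "(LINT \<omega>|M. S \<omega> * S \<omega>) = real n * (real n - 1) * (2*m2 + 4*(real n - 2)*m1 + (real n - 2)*(real n - 3)*(mu*mu))"
proof -
  have eq: "S \<omega> * S \<omega> = (\<Sum>i<n. \<Sum>j\<in>{..<n}-{i}. \<Sum>k<n. \<Sum>l\<in>{..<n}-{k}. K (Z i \<omega>) (Z j \<omega>) * K (Z k \<omega>) (Z l \<omega>))" for \<omega>
    unfolding S_def by (rule sum4_prod)
  have ii: "\<And>k l. k \<in> {..<n} \<Longrightarrow> l \<in> {..<n}-{k} \<Longrightarrow> integrable M (\<lambda>\<omega>. K (Z i \<omega>) (Z j \<omega>) * K (Z k \<omega>) (Z l \<omega>))"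
    if "i \<in> {..<n}" "j \<in> {..<n}-{i}" for i j
    by (rule T_val(1)) (use that in auto)
  have i2: "\<And>i j. i \<in> {..<n} \<Longrightarrow> j \<in> {..<n}-{i} \<Longrightarrow> integrable M (\<lambda>\<omega>. \<Sum>k<n. \<Sum>l\<in>{..<n}-{k}. K (Z i \<omega>) (Z j \<omega>) * K (Z k \<omega>) (Z l \<omega>))"
    by (rule int_sum2(1)[OF _ _ ii]) auto
  show "integrable M (\<lambda>\<omega>. S \<omega> * S \<omega>)" unfolding eq by (rule int_sum2(1)[OF _ _ i2]) auto
  have "(LINT \<omega>|M. S \<omega> * S \<omega>) = (\<Sum>i<n. \<Sum>j\<in>{..<n}-{i}. \<Sum>k<n. \<Sum>l\<in>{..<n}-{k}. LINT \<omega>|M. K (Z i \<omega>) (Z j \<omega>) * K (Z k \<omega>) (Z l \<omega>))"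
    unfolding eq
  proof (subst int_sum2(2)[OF _ _ i2])
    show "(\<Sum>i<n. \<Sum>j\<in>{..<n}-{i}. LINT \<omega>|M. (\<Sum>k<n. \<Sum>l\<in>{..<n}-{k}. K (Z i \<omega>) (Z j \<omega>) * K (Z k \<omega>) (Z l \<omega>))) =
      (\<Sum>i<n. \<Sum>j\<in>{..<n}-{i}. \<Sum>k<n. \<Sum>l\<in>{..<n}-{k}. LINT \<omega>|M. K (Z i \<omega>) (Z j \<omega>) * K (Z k \<omega>) (Z l \<omega>))"
    proof (intro sum.cong refl)
      fix i j assume a: "i \<in> {..<n}" "j \<in> {..<n}-{i}"
      show "(LINT \<omega>|M. (\<Sum>k<n. \<Sum>l\<in>{..<n}-{k}. K (Z i \<omega>) (Z j \<omega>) * K (Z k \<omega>) (Z l \<omega>))) =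
        (\<Sum>k<n. \<Sum>l\<in>{..<n}-{k}. LINT \<omega>|M. K (Z i \<omega>) (Z j \<omega>) * K (Z k \<omega>) (Z l \<omega>))"
        by (rule int_sum2(2)[OF _ _ ii[OF a]]) auto
    qed
  qed auto
  also have "\<dots> = (\<Sum>i<n. \<Sum>j\<in>{..<n}-{i}. \<Sum>k<n. \<Sum>l\<in>{..<n}-{k}. Tv i j k l)"
    by (intro sum.cong refl T_val(2)) auto
  also have "\<dots> = (\<Sum>i<n. \<Sum>j\<in>{..<n}-{i}. 2*m2 + 4*(real n - 2)*m1 + (real n - 2)*(real n - 3)*(mu*mu))"
    unfolding Tv_def by (intro sum.cong refl inner_count) auto
  also have "\<dots> = (\<Sum>i<n. (real n - 1) * (2*m2 + 4*(real n - 2)*m1 + (real n - 2)*(real n - 3)*(mu*mu)))"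
    using n2 by (intro sum.cong refl) (simp add: of_nat_diff)
  finally show "(LINT \<omega>|M. S \<omega> * S \<omega>) = real n * (real n - 1) * (2*m2 + 4*(real n - 2)*m1 + (real n - 2)*(real n - 3)*(mu*mu))"
    by simp
qed

theorem ustat_var:
  "var M (\<lambda>\<omega>. S \<omega> / (real n * (real n - 1))) = (2*(m2 - mu*mu) + 4*(real n - 2)*(m1 - mu*mu)) / (real n * (real n - 1))"
proof -
  define c where "c = real n * (real n - 1)"
  have c0: "c > 0" unfolding c_def using n2 by simp
  have "var M (\<lambda>\<omega>. S \<omega> / c) = (LINT \<omega>|M. S \<omega> / c * (S \<omega> / c)) - (LINT \<omega>|M. S \<omega> / c) * (LINT \<omega>|M. S \<omega> / c)"
    by (rule var_eq) (use ES(1) ES2(1) in auto)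
  also have "(LINT \<omega>|M. S \<omega> / c * (S \<omega> / c)) = (LINT \<omega>|M. S \<omega> * S \<omega>) / (c * c)"
    by simp
  also have "(LINT \<omega>|M. S \<omega> / c) = (LINT \<omega>|M. S \<omega>) / c" by simp
  finally have "var M (\<lambda>\<omega>. S \<omega> / c) = c * (2*m2 + 4*(real n - 2)*m1 + (real n - 2)*(real n - 3)*(mu*mu)) / (c*c) - (c * mu / c) * (c * mu / c)"
    unfolding ES(2) ES2(2) c_def by simp
  also have "\<dots> = (2*m2 + 4*(real n - 2)*m1 + (real n - 2)*(real n - 3)*(mu*mu)) / c - mu * mu"
    using c0 by (simp add: field_simps power2_eq_square)
  also have "\<dots> = (2*m2 + 4*(real n - 2)*m1 + (real n - 2)*(real n - 3)*(mu*mu) - c * (mu * mu)) / c"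
    using c0 by (simp add: field_simps)
  also have "2*m2 + 4*(real n - 2)*m1 + (real n - 2)*(real n - 3)*(mu*mu) - c * (mu * mu) = 2*(m2 - mu*mu) + 4*(real n - 2)*(m1 - mu*mu)"
    unfolding c_def by (simp add: algebra_simps)
  finally show ?thesis unfolding c_def .
qed

end

lemma sumR:
  fixes F :: "nat + 'p::finite \<Rightarrow> 'b::comm_monoid_add"
  shows "sum F (Inl ` {0,1,2::nat} \<union> range Inr) = F (Inl 0) + F (Inl 1) + F (Inl 2) + (\<Sum>j\<in>UNIV. F (Inr j))"
proof -
  have "sum F (Inl ` {0,1,2::nat} \<union> range Inr) = sum F (Inl ` {0,1,2::nat}) + sum F (range Inr)"
    by (rule sum.union_disjoint) auto
  also have "sum F (Inl ` {0,1,2::nat}) = F (Inl 0) + F (Inl 1) + F (Inl 2)"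
    by (subst sum.reindex) (auto simp: inj_on_def add.assoc)
  also have "sum F (range Inr) = (\<Sum>j\<in>UNIV. F (Inr j))"
    by (subst sum.reindex) (auto simp: inj_on_def)
  finally show ?thesis .
qed

locale spec = prob_space M for M :: "'a measure" +
  fixes X :: "nat \<Rightarrow> 'a \<Rightarrow> real^'p::finite" and Y :: "nat \<Rightarrow> 'a \<Rightarrow> real" and n :: nat
  assumes nn: "n \<ge> 2"
    and meas: "\<And>i. i < n \<Longrightarrow> (\<lambda>\<omega>. (X i \<omega>, Y i \<omega>)) \<in> borel_measurable M"
    and indep: "indep_vars (\<lambda>_. borel) (\<lambda>i \<omega>. (X i \<omega>, Y i \<omega>)) {..<n}"
    and ident: "\<And>i. i < n \<Longrightarrow>
       distr M borel (\<lambda>\<omega>. (X i \<omega>, Y i \<omega>)) = distr M borel (\<lambda>\<omega>. (X 0 \<omega>, Y 0 \<omega>))"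
    and int_Y4: "integrable M (\<lambda>\<omega>. (Y 0 \<omega>) ^ 4)"
    and int_W2: "integrable M (\<lambda>\<omega>. (norm (Y 0 \<omega> *\<^sub>R X 0 \<omega>))\<^sup>2)"
begin


definition "\<alpha> = (LINT \<omega>|M. Y 0 \<omega>)"

definition fK :: "nat + 'p \<Rightarrow> (real^'p) \<times> real \<Rightarrow> real" where
  "fK r a = (case r of Inl k \<Rightarrow> (if k = 0 then (snd a - \<alpha>)\<^sup>2/2 else if k = 1 then 1 else -(snd a - \<alpha>))
                  | Inr j \<Rightarrow> -(snd a * fst a $ j))"
definition gK :: "nat + 'p \<Rightarrow> (real^'p) \<times> real \<Rightarrow> real" where
  "gK r a = (case r of Inl k \<Rightarrow> (if k = 0 then 1 else if k = 1 then (snd a - \<alpha>)\<^sup>2/2 else (snd a - \<alpha>))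
                  | Inr j \<Rightarrow> snd a * fst a $ j)"
definition wf :: "'p \<Rightarrow> (real^'p) \<times> real \<Rightarrow> real" where "wf j a = snd a * fst a $ j"

abbreviation "RR \<equiv> Inl ` {0,1,2::nat} \<union> range (Inr :: 'p \<Rightarrow> nat + 'p)"

lemma Z0m': "(\<lambda>\<omega>. (X 0 \<omega>, Y 0 \<omega>)) \<in> borel_measurable M" using meas nn by auto
lemma Z0m: "(\<lambda>\<omega>. (X 0 \<omega>, Y 0 \<omega>)) \<in> borel_measurable M" using meas nn by auto

lemma Ym: "(\<lambda>\<omega>. Y 0 \<omega>) \<in> borel_measurable M"
  using measurable_compose[OF Z0m', of snd] by (simp add: borel_measurable_continuous_onI continuous_intros)
lemma Xm: "(\<lambda>\<omega>. X 0 \<omega>) \<in> borel_measurable M"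
  using measurable_compose[OF Z0m', of fst] by (simp add: borel_measurable_continuous_onI continuous_intros)

lemma IY2: "integrable M (\<lambda>\<omega>. (Y 0 \<omega>)\<^sup>2)"
  by (rule sq_int) (use int_Y4 Ym in \<open>auto simp: power_mult[symmetric]\<close>)
lemma IY: "integrable M (\<lambda>\<omega>. Y 0 \<omega>)"
  by (rule sq_int) (use IY2 Ym in auto)
lemma IY3: "integrable M (\<lambda>\<omega>. (Y 0 \<omega>)^3)"
proof -
  have "integrable M (\<lambda>\<omega>. Y 0 \<omega> * (Y 0 \<omega>)\<^sup>2)"
    by (rule sq_int_mult) (use IY2 int_Y4 Ym in \<open>auto simp: power_mult[symmetric]\<close>)
  thus ?thesis by (simp add: power2_eq_square power3_eq_cube mult.assoc)
qed

lemma I4: "integrable M (\<lambda>\<omega>. (Y 0 \<omega> - \<alpha>)^4)"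
proof -
  have "integrable M (\<lambda>\<omega>. (Y 0 \<omega>)^4 - 4*\<alpha>*(Y 0 \<omega>)^3 + 6*\<alpha>\<^sup>2*(Y 0 \<omega>)\<^sup>2 - 4*\<alpha>^3*Y 0 \<omega> + \<alpha>^4)"
    using int_Y4 IY3 IY2 IY by auto
  moreover have "(\<lambda>\<omega>. (Y 0 \<omega>)^4 - 4*\<alpha>*(Y 0 \<omega>)^3 + 6*\<alpha>\<^sup>2*(Y 0 \<omega>)\<^sup>2 - 4*\<alpha>^3*Y 0 \<omega> + \<alpha>^4) = (\<lambda>\<omega>. (Y 0 \<omega> - \<alpha>)^4)"
    by (rule ext) (simp add: power2_eq_square power3_eq_cube power4_eq_xxxx algebra_simps)
  ultimately show ?thesis by simp
qed

lemma I2: "integrable M (\<lambda>\<omega>. (Y 0 \<omega> - \<alpha>)\<^sup>2)"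
  by (rule sq_int) (use I4 Ym in \<open>auto simp: power_mult[symmetric]\<close>)

lemma I2b: "integrable M (\<lambda>\<omega>. (\<alpha> - Y 0 \<omega>) * (\<alpha> - Y 0 \<omega>))"
proof -
  have "(\<lambda>\<omega>. (\<alpha> - Y 0 \<omega>) * (\<alpha> - Y 0 \<omega>)) = (\<lambda>\<omega>. (Y 0 \<omega> - \<alpha>)\<^sup>2)"
    by (auto simp: power2_eq_square algebra_simps)
  thus ?thesis using I2 by simp
qed

lemma IW: "integrable M (\<lambda>\<omega>. (Y 0 \<omega> * X 0 \<omega> $ j)\<^sup>2)"
proof (rule Bochner_Integration.integrable_bound[OF int_W2])
  have "(\<lambda>x. X 0 x $ j) \<in> borel_measurable M" using measurable_compose[OF Xm borel_measurable_nth] .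
  thus "(\<lambda>\<omega>. (Y 0 \<omega> * X 0 \<omega> $ j)\<^sup>2) \<in> borel_measurable M" using Ym by measurable
  show "AE x in M. norm ((Y 0 x * X 0 x $ j)\<^sup>2) \<le> norm ((norm (Y 0 x *\<^sub>R X 0 x))\<^sup>2)"
  proof (intro AE_I2)
    fix x
    have "\<bar>(Y 0 x *\<^sub>R X 0 x) $ j\<bar> \<le> norm (Y 0 x *\<^sub>R X 0 x)" by (rule component_le_norm_cart)
    hence "\<bar>Y 0 x * X 0 x $ j\<bar> \<le> norm (Y 0 x *\<^sub>R X 0 x)" by simp
    hence "\<bar>Y 0 x * X 0 x $ j\<bar>\<^sup>2 \<le> (norm (Y 0 x *\<^sub>R X 0 x))\<^sup>2" by (intro power_mono) auto
    thus "norm ((Y 0 x * X 0 x $ j)\<^sup>2) \<le> norm ((norm (Y 0 x *\<^sub>R X 0 x))\<^sup>2)" by simp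
  qed
qed

lemma fKm: "fK r \<in> borel_measurable borel"
proof (cases r)
  case (Inl k) thus ?thesis unfolding fK_def
    by (cases "k=0"; cases "k=1") (auto intro!: borel_measurable_continuous_onI continuous_intros)
next
  case (Inr j) thus ?thesis unfolding fK_def by (auto intro!: borel_measurable_continuous_onI continuous_intros)
qed
lemma gKm: "gK r \<in> borel_measurable borel"
proof (cases r)
  case (Inl k) thus ?thesis unfolding gK_def
    by (cases "k=0"; cases "k=1") (auto intro!: borel_measurable_continuous_onI continuous_intros)
next
  case (Inr j) thus ?thesis unfolding gK_def by (auto intro!: borel_measurable_continuous_onI continuous_intros)
qed
lemma wfm: "wf j \<in> borel_measurable borel"
  unfolding wf_def by (auto intro!: borel_measurable_continuous_onI continuous_intros)

lemma RR_cases: assumes "r \<in> RR" obtains "r = Inl 0" | "r = Inl 1" | "r = Inl 2" | j where "r = Inr j"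
  using assms by auto

lemma fKsq: "r \<in> RR \<Longrightarrow> integrable M (\<lambda>\<omega>. (fK r (X 0 \<omega>, Y 0 \<omega>))\<^sup>2)"
  by (erule RR_cases) (use I4 I2 I2b IW in \<open>auto simp: fK_def power2_eq_square power4_eq_xxxx mult.assoc\<close>)
lemma gKsq: "r \<in> RR \<Longrightarrow> integrable M (\<lambda>\<omega>. (gK r (X 0 \<omega>, Y 0 \<omega>))\<^sup>2)"
  by (erule RR_cases) (use I4 I2 I2b IW in \<open>auto simp: gK_def power2_eq_square power4_eq_xxxx mult.assoc\<close>)
lemma wfsq: "integrable M (\<lambda>\<omega>. (wf j (X 0 \<omega>, Y 0 \<omega>))\<^sup>2)"
  using IW by (simp add: wf_def)

lemma symK1: "(\<Sum>r\<in>RR. fK r a * gK r b) = (\<Sum>r\<in>RR. fK r b * gK r a)"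
  unfolding sumR by (simp add: fK_def gK_def algebra_simps)

lemma symK2: "(\<Sum>j\<in>UNIV. wf j a * wf j b) = (\<Sum>j\<in>UNIV. wf j b * wf j a)"
  by (simp add: mult.commute)

lemma iid: "iidZ M (\<lambda>i \<omega>. (X i \<omega>, Y i \<omega>)) n"
  by (intro iidZ.intro iidZ_axioms.intro prob_space_axioms meas indep ident nn)

lemma K1_ustat: "ustat M (\<lambda>i \<omega>. (X i \<omega>, Y i \<omega>)) n RR fK gK"
proof (rule ustat.intro[OF iid], unfold ustat_axioms_def, intro conjI allI impI)
  show "finite RR" by simp
  show "\<And>r. r \<in> RR \<Longrightarrow> fK r \<in> borel_measurable borel" by (rule fKm)
  show "\<And>r. r \<in> RR \<Longrightarrow> gK r \<in> borel_measurable borel" by (rule gKm)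
  show "\<And>r. r \<in> RR \<Longrightarrow> integrable M (\<lambda>\<omega>. (fK r (X 0 \<omega>, Y 0 \<omega>))\<^sup>2)" by (rule fKsq)
  show "\<And>r. r \<in> RR \<Longrightarrow> integrable M (\<lambda>\<omega>. (gK r (X 0 \<omega>, Y 0 \<omega>))\<^sup>2)" by (rule gKsq)
  show "\<And>a b. (\<Sum>r\<in>RR. fK r a * gK r b) = (\<Sum>r\<in>RR. fK r b * gK r a)" by (rule symK1)
qed

lemma K2_ustat: "ustat M (\<lambda>i \<omega>. (X i \<omega>, Y i \<omega>)) n UNIV wf wf"
proof (rule ustat.intro[OF iid], unfold ustat_axioms_def, intro conjI allI impI)
  show "finite (UNIV :: 'p set)" by simp
  show "\<And>r. r \<in> UNIV \<Longrightarrow> wf r \<in> borel_measurable borel" by (rule wfm)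
  show "\<And>r. r \<in> UNIV \<Longrightarrow> wf r \<in> borel_measurable borel" by (rule wfm)
  show "\<And>r. r \<in> UNIV \<Longrightarrow> integrable M (\<lambda>\<omega>. (wf r (X 0 \<omega>, Y 0 \<omega>))\<^sup>2)" by (rule wfsq)
  show "\<And>r. r \<in> UNIV \<Longrightarrow> integrable M (\<lambda>\<omega>. (wf r (X 0 \<omega>, Y 0 \<omega>))\<^sup>2)" by (rule wfsq)
  show "\<And>a b. (\<Sum>r\<in>UNIV. wf r a * wf r b) = (\<Sum>r\<in>UNIV. wf r b * wf r a)" by (rule symK2)
qed


end

lemma sym_sum_full:
  fixes k :: "nat \<Rightarrow> nat \<Rightarrow> real" assumes "\<And>i j. k i j = k j i"
  shows "(\<Sum>i<n. \<Sum>j<n. k i j) = (\<Sum>i<n. k i i) + 2 * (\<Sum>j<n. \<Sum>i<j. k i j)"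
proof (induction n)
  case 0 show ?case by simp
next
  case (Suc n)
  have "(\<Sum>i<Suc n. \<Sum>j<Suc n. k i j) = (\<Sum>i<n. \<Sum>j<n. k i j) + (\<Sum>i<n. k i n) + (\<Sum>j<n. k n j) + k n n"
    by (simp add: sum.distrib)
  also have "(\<Sum>j<n. k n j) = (\<Sum>i<n. k i n)" using assms by simp
  finally show ?case using Suc.IH by simp
qed

lemma sym_sum2:
  fixes k :: "nat \<Rightarrow> nat \<Rightarrow> real" assumes "\<And>i j. k i j = k j i"
  shows "(\<Sum>i<n. \<Sum>j\<in>{..<n}-{i}. k i j) = 2 * (\<Sum>j<n. \<Sum>i<j. k i j)"
proof -
  have "(\<Sum>j\<in>{..<n}-{i}. k i j) = (\<Sum>j<n. k i j) - k i i" if "i<n" for i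
    using that by (simp add: sum_diff1)
  hence "(\<Sum>i<n. \<Sum>j\<in>{..<n}-{i}. k i j) = (\<Sum>i<n. \<Sum>j<n. k i j) - (\<Sum>i<n. k i i)"
    by (simp add: sum_subtractf)
  thus ?thesis using sym_sum_full[OF assms] by simp
qed

lemma var_sum:
  fixes y :: "nat \<Rightarrow> real" assumes "n > 0"
  shows "(\<Sum>i<n. \<Sum>j\<in>{..<n}-{i}. (y i - a)\<^sup>2/2 + (y j - a)\<^sup>2/2 - (y i - a)*(y j - a))
       = real n * (\<Sum>i<n. (y i - (\<Sum>k<n. y k)/real n)\<^sup>2)"
proof -
  define k where "k i j = (y i)\<^sup>2/2 + (y j)\<^sup>2/2 - y i * y j" for i j
  have kk: "(y i - a)\<^sup>2/2 + (y j - a)\<^sup>2/2 - (y i - a)*(y j - a) = k i j" for i j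
    by (simp add: k_def power2_eq_square field_simps)
  have "(\<Sum>j\<in>{..<n}-{i}. k i j) = (\<Sum>j<n. k i j)" if "i<n" for i
    using that by (simp add: sum_diff1 k_def power2_eq_square)
  hence L: "(\<Sum>i<n. \<Sum>j\<in>{..<n}-{i}. (y i - a)\<^sup>2/2 + (y j - a)\<^sup>2/2 - (y i - a)*(y j - a)) = (\<Sum>i<n. \<Sum>j<n. k i j)"
    unfolding kk by simp
  have inner: "(\<Sum>j<n. k i j) = real n * (y i)\<^sup>2/2 + (\<Sum>j<n. (y j)\<^sup>2)/2 - y i * (\<Sum>j<n. y j)" for i
    by (simp add: k_def sum.distrib sum_subtractf sum_divide_distrib[symmetric] sum_distrib_left)
  have full: "(\<Sum>i<n. \<Sum>j<n. k i j) = real n * (\<Sum>i<n. (y i)\<^sup>2) - (\<Sum>i<n. y i)\<^sup>2"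
    unfolding inner
    by (simp add: sum.distrib sum_subtractf sum_divide_distrib[symmetric] sum_distrib_left[symmetric]
        sum_distrib_right[symmetric] power2_eq_square)
  define m where "m = (\<Sum>k<n. y k)/real n"
  have "(\<Sum>i<n. (y i - m)\<^sup>2) = (\<Sum>i<n. (y i)\<^sup>2) - 2 * m * (\<Sum>i<n. y i) + real n * m\<^sup>2"
    by (simp add: power2_diff sum.distrib sum_subtractf sum_distrib_left[symmetric] sum_distrib_right[symmetric] mult.assoc)
  hence "real n * (\<Sum>i<n. (y i - m)\<^sup>2) = real n * (\<Sum>i<n. (y i)\<^sup>2) - (\<Sum>i<n. y i)\<^sup>2"
    using assms unfolding m_def by (simp add: field_simps power2_eq_square)
  thus ?thesis using L full unfolding m_def by simp
qed

lemma choose2_real: "real (n choose 2) = real n * (real n - 1) / 2"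
proof (induction n)
  case 0 show ?case by simp
next
  case (Suc n)
  have "Suc n choose 2 = (n choose 1) + (n choose 2)"
    using binomial_Suc_Suc[of n 1] by (simp add: numeral_2_eq_2)
  thus ?case using Suc.IH by (simp add: field_simps)
qed


context spec begin

abbreviation "EE \<equiv> ustat.Ef M (\<lambda>i \<omega>. (X i \<omega>, Y i \<omega>))"

definition "\<sigma>2 = (LINT \<omega>|M. (Y 0 \<omega> - \<alpha>)\<^sup>2)"
definition "\<mu>4 = (LINT \<omega>|M. (Y 0 \<omega> - \<alpha>) ^ 4)"
definition "U3 = (LINT \<omega>|M. (Y 0 \<omega> - \<alpha>) ^ 3)"
definition "bb j = (LINT \<omega>|M. Y 0 \<omega> * X 0 \<omega> $ j)"
definition "AA j k = (LINT \<omega>|M. (Y 0 \<omega> * X 0 \<omega> $ j) * (Y 0 \<omega> * X 0 \<omega> $ k))"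
definition "pp j = (LINT \<omega>|M. (Y 0 \<omega> - \<alpha>)\<^sup>2 * (Y 0 \<omega> * X 0 \<omega> $ j))"
definition "cc j = (LINT \<omega>|M. (Y 0 \<omega> * X 0 \<omega> $ j) * (Y 0 \<omega> - \<alpha>))"

lemma Ef_scale:
  assumes "\<And>x y. \<phi> (x,y) = c * \<psi> x y"
  shows "EE \<phi> = c * (LINT \<omega>|M. \<psi> (X 0 \<omega>) (Y 0 \<omega>))"
  using assms by (simp add: ustat.Ef_def[OF K1_ustat])

lemma EU0: "(LINT \<omega>|M. Y 0 \<omega> - \<alpha>) = 0"
  using IY by (simp add: \<alpha>_def prob_space)

lemma eFF_00[simp]: "EE (\<lambda>a. fK (Inl 0) a * fK (Inl 0) a) = (1/4) * \<mu>4"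
proof -
  have "EE (\<lambda>a. fK (Inl 0) a * fK (Inl 0) a) = (1/4) * (LINT \<omega>|M. (\<lambda>x y. (y - \<alpha>)^4) (X 0 \<omega>) (Y 0 \<omega>))"
    by (rule Ef_scale) (simp add: fK_def gK_def wf_def power2_eq_square power3_eq_cube power4_eq_xxxx field_simps)
  thus ?thesis by (simp add: \<mu>4_def \<sigma>2_def U3_def pp_def bb_def cc_def AA_def EU0 prob_space)
qed

lemma eFF_01[simp]: "EE (\<lambda>a. fK (Inl 0) a * fK (Inl (Suc 0)) a) = (1/2) * \<sigma>2"
proof -
  have "EE (\<lambda>a. fK (Inl 0) a * fK (Inl (Suc 0)) a) = (1/2) * (LINT \<omega>|M. (\<lambda>x y. (y - \<alpha>)\<^sup>2) (X 0 \<omega>) (Y 0 \<omega>))"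
    by (rule Ef_scale) (simp add: fK_def gK_def wf_def power2_eq_square power3_eq_cube power4_eq_xxxx field_simps)
  thus ?thesis by (simp add: \<mu>4_def \<sigma>2_def U3_def pp_def bb_def cc_def AA_def EU0 prob_space)
qed

lemma eFF_10[simp]: "EE (\<lambda>a. fK (Inl (Suc 0)) a * fK (Inl 0) a) = (1/2) * \<sigma>2"
proof -
  have "EE (\<lambda>a. fK (Inl (Suc 0)) a * fK (Inl 0) a) = (1/2) * (LINT \<omega>|M. (\<lambda>x y. (y - \<alpha>)\<^sup>2) (X 0 \<omega>) (Y 0 \<omega>))"
    by (rule Ef_scale) (simp add: fK_def gK_def wf_def power2_eq_square power3_eq_cube power4_eq_xxxx field_simps)
  thus ?thesis by (simp add: \<mu>4_def \<sigma>2_def U3_def pp_def bb_def cc_def AA_def EU0 prob_space)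
qed

lemma eFF_02[simp]: "EE (\<lambda>a. fK (Inl 0) a * fK (Inl 2) a) = (-1/2) * U3"
proof -
  have "EE (\<lambda>a. fK (Inl 0) a * fK (Inl 2) a) = (-1/2) * (LINT \<omega>|M. (\<lambda>x y. (y - \<alpha>)^3) (X 0 \<omega>) (Y 0 \<omega>))"
    by (rule Ef_scale) (simp add: fK_def gK_def wf_def power2_eq_square power3_eq_cube power4_eq_xxxx field_simps)
  thus ?thesis by (simp add: \<mu>4_def \<sigma>2_def U3_def pp_def bb_def cc_def AA_def EU0 prob_space)
qed

lemma eFF_20[simp]: "EE (\<lambda>a. fK (Inl 2) a * fK (Inl 0) a) = (-1/2) * U3"
proof -
  have "EE (\<lambda>a. fK (Inl 2) a * fK (Inl 0) a) = (-1/2) * (LINT \<omega>|M. (\<lambda>x y. (y - \<alpha>)^3) (X 0 \<omega>) (Y 0 \<omega>))"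
    by (rule Ef_scale) (simp add: fK_def gK_def wf_def power2_eq_square power3_eq_cube power4_eq_xxxx field_simps)
  thus ?thesis by (simp add: \<mu>4_def \<sigma>2_def U3_def pp_def bb_def cc_def AA_def EU0 prob_space)
qed

lemma eFF_0k[simp]: "EE (\<lambda>a. fK (Inl 0) a * fK (Inr k) a) = (-1/2) * pp k"
proof -
  have "EE (\<lambda>a. fK (Inl 0) a * fK (Inr k) a) = (-1/2) * (LINT \<omega>|M. (\<lambda>x y. (y - \<alpha>)\<^sup>2 * (y * x $ k)) (X 0 \<omega>) (Y 0 \<omega>))"
    by (rule Ef_scale) (simp add: fK_def gK_def wf_def power2_eq_square power3_eq_cube power4_eq_xxxx field_simps)
  thus ?thesis by (simp add: \<mu>4_def \<sigma>2_def U3_def pp_def bb_def cc_def AA_def EU0 prob_space)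
qed

lemma eFF_k0[simp]: "EE (\<lambda>a. fK (Inr k) a * fK (Inl 0) a) = (-1/2) * pp k"
proof -
  have "EE (\<lambda>a. fK (Inr k) a * fK (Inl 0) a) = (-1/2) * (LINT \<omega>|M. (\<lambda>x y. (y - \<alpha>)\<^sup>2 * (y * x $ k)) (X 0 \<omega>) (Y 0 \<omega>))"
    by (rule Ef_scale) (simp add: fK_def gK_def wf_def power2_eq_square power3_eq_cube power4_eq_xxxx field_simps)
  thus ?thesis by (simp add: \<mu>4_def \<sigma>2_def U3_def pp_def bb_def cc_def AA_def EU0 prob_space)
qed

lemma eFF_11[simp]: "EE (\<lambda>a. fK (Inl (Suc 0)) a * fK (Inl (Suc 0)) a) = (1) * 1"
proof -
  have "EE (\<lambda>a. fK (Inl (Suc 0)) a * fK (Inl (Suc 0)) a) = (1) * (LINT \<omega>|M. (\<lambda>x y. 1) (X 0 \<omega>) (Y 0 \<omega>))"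
    by (rule Ef_scale) (simp add: fK_def gK_def wf_def power2_eq_square power3_eq_cube power4_eq_xxxx field_simps)
  thus ?thesis by (simp add: \<mu>4_def \<sigma>2_def U3_def pp_def bb_def cc_def AA_def EU0 prob_space)
qed

lemma eFF_12[simp]: "EE (\<lambda>a. fK (Inl (Suc 0)) a * fK (Inl 2) a) = (-1) * 0"
proof -
  have "EE (\<lambda>a. fK (Inl (Suc 0)) a * fK (Inl 2) a) = (-1) * (LINT \<omega>|M. (\<lambda>x y. y - \<alpha>) (X 0 \<omega>) (Y 0 \<omega>))"
    by (rule Ef_scale) (simp add: fK_def gK_def wf_def power2_eq_square power3_eq_cube power4_eq_xxxx field_simps)
  thus ?thesis by (simp add: \<mu>4_def \<sigma>2_def U3_def pp_def bb_def cc_def AA_def EU0 prob_space)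
qed

lemma eFF_21[simp]: "EE (\<lambda>a. fK (Inl 2) a * fK (Inl (Suc 0)) a) = (-1) * 0"
proof -
  have "EE (\<lambda>a. fK (Inl 2) a * fK (Inl (Suc 0)) a) = (-1) * (LINT \<omega>|M. (\<lambda>x y. y - \<alpha>) (X 0 \<omega>) (Y 0 \<omega>))"
    by (rule Ef_scale) (simp add: fK_def gK_def wf_def power2_eq_square power3_eq_cube power4_eq_xxxx field_simps)
  thus ?thesis by (simp add: \<mu>4_def \<sigma>2_def U3_def pp_def bb_def cc_def AA_def EU0 prob_space)
qed

lemma eFF_1k[simp]: "EE (\<lambda>a. fK (Inl (Suc 0)) a * fK (Inr k) a) = (-1) * bb k"
proof -
  have "EE (\<lambda>a. fK (Inl (Suc 0)) a * fK (Inr k) a) = (-1) * (LINT \<omega>|M. (\<lambda>x y. y * x $ k) (X 0 \<omega>) (Y 0 \<omega>))"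
    by (rule Ef_scale) (simp add: fK_def gK_def wf_def power2_eq_square power3_eq_cube power4_eq_xxxx field_simps)
  thus ?thesis by (simp add: \<mu>4_def \<sigma>2_def U3_def pp_def bb_def cc_def AA_def EU0 prob_space)
qed

lemma eFF_k1[simp]: "EE (\<lambda>a. fK (Inr k) a * fK (Inl (Suc 0)) a) = (-1) * bb k"
proof -
  have "EE (\<lambda>a. fK (Inr k) a * fK (Inl (Suc 0)) a) = (-1) * (LINT \<omega>|M. (\<lambda>x y. y * x $ k) (X 0 \<omega>) (Y 0 \<omega>))"
    by (rule Ef_scale) (simp add: fK_def gK_def wf_def power2_eq_square power3_eq_cube power4_eq_xxxx field_simps)
  thus ?thesis by (simp add: \<mu>4_def \<sigma>2_def U3_def pp_def bb_def cc_def AA_def EU0 prob_space)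
qed

lemma eFF_22[simp]: "EE (\<lambda>a. fK (Inl 2) a * fK (Inl 2) a) = (1) * \<sigma>2"
proof -
  have "EE (\<lambda>a. fK (Inl 2) a * fK (Inl 2) a) = (1) * (LINT \<omega>|M. (\<lambda>x y. (y - \<alpha>)\<^sup>2) (X 0 \<omega>) (Y 0 \<omega>))"
    by (rule Ef_scale) (simp add: fK_def gK_def wf_def power2_eq_square power3_eq_cube power4_eq_xxxx field_simps)
  thus ?thesis by (simp add: \<mu>4_def \<sigma>2_def U3_def pp_def bb_def cc_def AA_def EU0 prob_space)
qed

lemma eFF_2k[simp]: "EE (\<lambda>a. fK (Inl 2) a * fK (Inr k) a) = (1) * cc k"
proof -
  have "EE (\<lambda>a. fK (Inl 2) a * fK (Inr k) a) = (1) * (LINT \<omega>|M. (\<lambda>x y. (y * x $ k) * (y - \<alpha>)) (X 0 \<omega>) (Y 0 \<omega>))"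
    by (rule Ef_scale) (simp add: fK_def gK_def wf_def power2_eq_square power3_eq_cube power4_eq_xxxx field_simps)
  thus ?thesis by (simp add: \<mu>4_def \<sigma>2_def U3_def pp_def bb_def cc_def AA_def EU0 prob_space)
qed

lemma eFF_k2[simp]: "EE (\<lambda>a. fK (Inr k) a * fK (Inl 2) a) = (1) * cc k"
proof -
  have "EE (\<lambda>a. fK (Inr k) a * fK (Inl 2) a) = (1) * (LINT \<omega>|M. (\<lambda>x y. (y * x $ k) * (y - \<alpha>)) (X 0 \<omega>) (Y 0 \<omega>))"
    by (rule Ef_scale) (simp add: fK_def gK_def wf_def power2_eq_square power3_eq_cube power4_eq_xxxx field_simps)
  thus ?thesis by (simp add: \<mu>4_def \<sigma>2_def U3_def pp_def bb_def cc_def AA_def EU0 prob_space)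
qed

lemma eFF_jk[simp]: "EE (\<lambda>a. fK (Inr j) a * fK (Inr k) a) = (1) * AA j k"
proof -
  have "EE (\<lambda>a. fK (Inr j) a * fK (Inr k) a) = (1) * (LINT \<omega>|M. (\<lambda>x y. (y * x $ j) * (y * x $ k)) (X 0 \<omega>) (Y 0 \<omega>))"
    by (rule Ef_scale) (simp add: fK_def gK_def wf_def power2_eq_square power3_eq_cube power4_eq_xxxx field_simps)
  thus ?thesis by (simp add: \<mu>4_def \<sigma>2_def U3_def pp_def bb_def cc_def AA_def EU0 prob_space)
qed

lemma eGG_00[simp]: "EE (\<lambda>a. gK (Inl 0) a * gK (Inl 0) a) = (1) * 1"
proof -
  have "EE (\<lambda>a. gK (Inl 0) a * gK (Inl 0) a) = (1) * (LINT \<omega>|M. (\<lambda>x y. 1) (X 0 \<omega>) (Y 0 \<omega>))"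
    by (rule Ef_scale) (simp add: fK_def gK_def wf_def power2_eq_square power3_eq_cube power4_eq_xxxx field_simps)
  thus ?thesis by (simp add: \<mu>4_def \<sigma>2_def U3_def pp_def bb_def cc_def AA_def EU0 prob_space)
qed

lemma eGG_01[simp]: "EE (\<lambda>a. gK (Inl 0) a * gK (Inl (Suc 0)) a) = (1/2) * \<sigma>2"
proof -
  have "EE (\<lambda>a. gK (Inl 0) a * gK (Inl (Suc 0)) a) = (1/2) * (LINT \<omega>|M. (\<lambda>x y. (y - \<alpha>)\<^sup>2) (X 0 \<omega>) (Y 0 \<omega>))"
    by (rule Ef_scale) (simp add: fK_def gK_def wf_def power2_eq_square power3_eq_cube power4_eq_xxxx field_simps)
  thus ?thesis by (simp add: \<mu>4_def \<sigma>2_def U3_def pp_def bb_def cc_def AA_def EU0 prob_space)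
qed

lemma eGG_10[simp]: "EE (\<lambda>a. gK (Inl (Suc 0)) a * gK (Inl 0) a) = (1/2) * \<sigma>2"
proof -
  have "EE (\<lambda>a. gK (Inl (Suc 0)) a * gK (Inl 0) a) = (1/2) * (LINT \<omega>|M. (\<lambda>x y. (y - \<alpha>)\<^sup>2) (X 0 \<omega>) (Y 0 \<omega>))"
    by (rule Ef_scale) (simp add: fK_def gK_def wf_def power2_eq_square power3_eq_cube power4_eq_xxxx field_simps)
  thus ?thesis by (simp add: \<mu>4_def \<sigma>2_def U3_def pp_def bb_def cc_def AA_def EU0 prob_space)
qed

lemma eGG_02[simp]: "EE (\<lambda>a. gK (Inl 0) a * gK (Inl 2) a) = (1) * 0"
proof -
  have "EE (\<lambda>a. gK (Inl 0) a * gK (Inl 2) a) = (1) * (LINT \<omega>|M. (\<lambda>x y. y - \<alpha>) (X 0 \<omega>) (Y 0 \<omega>))"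
    by (rule Ef_scale) (simp add: fK_def gK_def wf_def power2_eq_square power3_eq_cube power4_eq_xxxx field_simps)
  thus ?thesis by (simp add: \<mu>4_def \<sigma>2_def U3_def pp_def bb_def cc_def AA_def EU0 prob_space)
qed

lemma eGG_20[simp]: "EE (\<lambda>a. gK (Inl 2) a * gK (Inl 0) a) = (1) * 0"
proof -
  have "EE (\<lambda>a. gK (Inl 2) a * gK (Inl 0) a) = (1) * (LINT \<omega>|M. (\<lambda>x y. y - \<alpha>) (X 0 \<omega>) (Y 0 \<omega>))"
    by (rule Ef_scale) (simp add: fK_def gK_def wf_def power2_eq_square power3_eq_cube power4_eq_xxxx field_simps)
  thus ?thesis by (simp add: \<mu>4_def \<sigma>2_def U3_def pp_def bb_def cc_def AA_def EU0 prob_space)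
qed

lemma eGG_0k[simp]: "EE (\<lambda>a. gK (Inl 0) a * gK (Inr k) a) = (1) * bb k"
proof -
  have "EE (\<lambda>a. gK (Inl 0) a * gK (Inr k) a) = (1) * (LINT \<omega>|M. (\<lambda>x y. y * x $ k) (X 0 \<omega>) (Y 0 \<omega>))"
    by (rule Ef_scale) (simp add: fK_def gK_def wf_def power2_eq_square power3_eq_cube power4_eq_xxxx field_simps)
  thus ?thesis by (simp add: \<mu>4_def \<sigma>2_def U3_def pp_def bb_def cc_def AA_def EU0 prob_space)
qed

lemma eGG_k0[simp]: "EE (\<lambda>a. gK (Inr k) a * gK (Inl 0) a) = (1) * bb k"
proof -
  have "EE (\<lambda>a. gK (Inr k) a * gK (Inl 0) a) = (1) * (LINT \<omega>|M. (\<lambda>x y. y * x $ k) (X 0 \<omega>) (Y 0 \<omega>))"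
    by (rule Ef_scale) (simp add: fK_def gK_def wf_def power2_eq_square power3_eq_cube power4_eq_xxxx field_simps)
  thus ?thesis by (simp add: \<mu>4_def \<sigma>2_def U3_def pp_def bb_def cc_def AA_def EU0 prob_space)
qed

lemma eGG_11[simp]: "EE (\<lambda>a. gK (Inl (Suc 0)) a * gK (Inl (Suc 0)) a) = (1/4) * \<mu>4"
proof -
  have "EE (\<lambda>a. gK (Inl (Suc 0)) a * gK (Inl (Suc 0)) a) = (1/4) * (LINT \<omega>|M. (\<lambda>x y. (y - \<alpha>)^4) (X 0 \<omega>) (Y 0 \<omega>))"
    by (rule Ef_scale) (simp add: fK_def gK_def wf_def power2_eq_square power3_eq_cube power4_eq_xxxx field_simps)
  thus ?thesis by (simp add: \<mu>4_def \<sigma>2_def U3_def pp_def bb_def cc_def AA_def EU0 prob_space)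
qed

lemma eGG_12[simp]: "EE (\<lambda>a. gK (Inl (Suc 0)) a * gK (Inl 2) a) = (1/2) * U3"
proof -
  have "EE (\<lambda>a. gK (Inl (Suc 0)) a * gK (Inl 2) a) = (1/2) * (LINT \<omega>|M. (\<lambda>x y. (y - \<alpha>)^3) (X 0 \<omega>) (Y 0 \<omega>))"
    by (rule Ef_scale) (simp add: fK_def gK_def wf_def power2_eq_square power3_eq_cube power4_eq_xxxx field_simps)
  thus ?thesis by (simp add: \<mu>4_def \<sigma>2_def U3_def pp_def bb_def cc_def AA_def EU0 prob_space)
qed

lemma eGG_21[simp]: "EE (\<lambda>a. gK (Inl 2) a * gK (Inl (Suc 0)) a) = (1/2) * U3"
proof -
  have "EE (\<lambda>a. gK (Inl 2) a * gK (Inl (Suc 0)) a) = (1/2) * (LINT \<omega>|M. (\<lambda>x y. (y - \<alpha>)^3) (X 0 \<omega>) (Y 0 \<omega>))"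
    by (rule Ef_scale) (simp add: fK_def gK_def wf_def power2_eq_square power3_eq_cube power4_eq_xxxx field_simps)
  thus ?thesis by (simp add: \<mu>4_def \<sigma>2_def U3_def pp_def bb_def cc_def AA_def EU0 prob_space)
qed

lemma eGG_1k[simp]: "EE (\<lambda>a. gK (Inl (Suc 0)) a * gK (Inr k) a) = (1/2) * pp k"
proof -
  have "EE (\<lambda>a. gK (Inl (Suc 0)) a * gK (Inr k) a) = (1/2) * (LINT \<omega>|M. (\<lambda>x y. (y - \<alpha>)\<^sup>2 * (y * x $ k)) (X 0 \<omega>) (Y 0 \<omega>))"
    by (rule Ef_scale) (simp add: fK_def gK_def wf_def power2_eq_square power3_eq_cube power4_eq_xxxx field_simps)
  thus ?thesis by (simp add: \<mu>4_def \<sigma>2_def U3_def pp_def bb_def cc_def AA_def EU0 prob_space)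
qed

lemma eGG_k1[simp]: "EE (\<lambda>a. gK (Inr k) a * gK (Inl (Suc 0)) a) = (1/2) * pp k"
proof -
  have "EE (\<lambda>a. gK (Inr k) a * gK (Inl (Suc 0)) a) = (1/2) * (LINT \<omega>|M. (\<lambda>x y. (y - \<alpha>)\<^sup>2 * (y * x $ k)) (X 0 \<omega>) (Y 0 \<omega>))"
    by (rule Ef_scale) (simp add: fK_def gK_def wf_def power2_eq_square power3_eq_cube power4_eq_xxxx field_simps)
  thus ?thesis by (simp add: \<mu>4_def \<sigma>2_def U3_def pp_def bb_def cc_def AA_def EU0 prob_space)
qed

lemma eGG_22[simp]: "EE (\<lambda>a. gK (Inl 2) a * gK (Inl 2) a) = (1) * \<sigma>2"
proof -
  have "EE (\<lambda>a. gK (Inl 2) a * gK (Inl 2) a) = (1) * (LINT \<omega>|M. (\<lambda>x y. (y - \<alpha>)\<^sup>2) (X 0 \<omega>) (Y 0 \<omega>))"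
    by (rule Ef_scale) (simp add: fK_def gK_def wf_def power2_eq_square power3_eq_cube power4_eq_xxxx field_simps)
  thus ?thesis by (simp add: \<mu>4_def \<sigma>2_def U3_def pp_def bb_def cc_def AA_def EU0 prob_space)
qed

lemma eGG_2k[simp]: "EE (\<lambda>a. gK (Inl 2) a * gK (Inr k) a) = (1) * cc k"
proof -
  have "EE (\<lambda>a. gK (Inl 2) a * gK (Inr k) a) = (1) * (LINT \<omega>|M. (\<lambda>x y. (y * x $ k) * (y - \<alpha>)) (X 0 \<omega>) (Y 0 \<omega>))"
    by (rule Ef_scale) (simp add: fK_def gK_def wf_def power2_eq_square power3_eq_cube power4_eq_xxxx field_simps)
  thus ?thesis by (simp add: \<mu>4_def \<sigma>2_def U3_def pp_def bb_def cc_def AA_def EU0 prob_space)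
qed

lemma eGG_k2[simp]: "EE (\<lambda>a. gK (Inr k) a * gK (Inl 2) a) = (1) * cc k"
proof -
  have "EE (\<lambda>a. gK (Inr k) a * gK (Inl 2) a) = (1) * (LINT \<omega>|M. (\<lambda>x y. (y * x $ k) * (y - \<alpha>)) (X 0 \<omega>) (Y 0 \<omega>))"
    by (rule Ef_scale) (simp add: fK_def gK_def wf_def power2_eq_square power3_eq_cube power4_eq_xxxx field_simps)
  thus ?thesis by (simp add: \<mu>4_def \<sigma>2_def U3_def pp_def bb_def cc_def AA_def EU0 prob_space)
qed

lemma eGG_jk[simp]: "EE (\<lambda>a. gK (Inr j) a * gK (Inr k) a) = (1) * AA j k"
proof -
  have "EE (\<lambda>a. gK (Inr j) a * gK (Inr k) a) = (1) * (LINT \<omega>|M. (\<lambda>x y. (y * x $ j) * (y * x $ k)) (X 0 \<omega>) (Y 0 \<omega>))"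
    by (rule Ef_scale) (simp add: fK_def gK_def wf_def power2_eq_square power3_eq_cube power4_eq_xxxx field_simps)
  thus ?thesis by (simp add: \<mu>4_def \<sigma>2_def U3_def pp_def bb_def cc_def AA_def EU0 prob_space)
qed

lemma efK_0[simp]: "EE (fK (Inl 0)) = (1/2) * \<sigma>2"
proof -
  have "EE (fK (Inl 0)) = (1/2) * (LINT \<omega>|M. (\<lambda>x y. (y - \<alpha>)\<^sup>2) (X 0 \<omega>) (Y 0 \<omega>))"
    by (rule Ef_scale) (simp add: fK_def gK_def wf_def power2_eq_square power3_eq_cube power4_eq_xxxx field_simps)
  thus ?thesis by (simp add: \<mu>4_def \<sigma>2_def U3_def pp_def bb_def cc_def AA_def EU0 prob_space)
qed

lemma efK_1[simp]: "EE (fK (Inl (Suc 0))) = (1) * 1"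
proof -
  have "EE (fK (Inl (Suc 0))) = (1) * (LINT \<omega>|M. (\<lambda>x y. 1) (X 0 \<omega>) (Y 0 \<omega>))"
    by (rule Ef_scale) (simp add: fK_def gK_def wf_def power2_eq_square power3_eq_cube power4_eq_xxxx field_simps)
  thus ?thesis by (simp add: \<mu>4_def \<sigma>2_def U3_def pp_def bb_def cc_def AA_def EU0 prob_space)
qed

lemma efK_2[simp]: "EE (fK (Inl 2)) = (-1) * 0"
proof -
  have "EE (fK (Inl 2)) = (-1) * (LINT \<omega>|M. (\<lambda>x y. y - \<alpha>) (X 0 \<omega>) (Y 0 \<omega>))"
    by (rule Ef_scale) (simp add: fK_def gK_def wf_def power2_eq_square power3_eq_cube power4_eq_xxxx field_simps)
  thus ?thesis by (simp add: \<mu>4_def \<sigma>2_def U3_def pp_def bb_def cc_def AA_def EU0 prob_space)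
qed

lemma efK_k[simp]: "EE (fK (Inr k)) = (-1) * bb k"
proof -
  have "EE (fK (Inr k)) = (-1) * (LINT \<omega>|M. (\<lambda>x y. y * x $ k) (X 0 \<omega>) (Y 0 \<omega>))"
    by (rule Ef_scale) (simp add: fK_def gK_def wf_def power2_eq_square power3_eq_cube power4_eq_xxxx field_simps)
  thus ?thesis by (simp add: \<mu>4_def \<sigma>2_def U3_def pp_def bb_def cc_def AA_def EU0 prob_space)
qed

lemma egK_0[simp]: "EE (gK (Inl 0)) = (1) * 1"
proof -
  have "EE (gK (Inl 0)) = (1) * (LINT \<omega>|M. (\<lambda>x y. 1) (X 0 \<omega>) (Y 0 \<omega>))"
    by (rule Ef_scale) (simp add: fK_def gK_def wf_def power2_eq_square power3_eq_cube power4_eq_xxxx field_simps)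
  thus ?thesis by (simp add: \<mu>4_def \<sigma>2_def U3_def pp_def bb_def cc_def AA_def EU0 prob_space)
qed

lemma egK_1[simp]: "EE (gK (Inl (Suc 0))) = (1/2) * \<sigma>2"
proof -
  have "EE (gK (Inl (Suc 0))) = (1/2) * (LINT \<omega>|M. (\<lambda>x y. (y - \<alpha>)\<^sup>2) (X 0 \<omega>) (Y 0 \<omega>))"
    by (rule Ef_scale) (simp add: fK_def gK_def wf_def power2_eq_square power3_eq_cube power4_eq_xxxx field_simps)
  thus ?thesis by (simp add: \<mu>4_def \<sigma>2_def U3_def pp_def bb_def cc_def AA_def EU0 prob_space)
qed

lemma egK_2[simp]: "EE (gK (Inl 2)) = (1) * 0"
proof -
  have "EE (gK (Inl 2)) = (1) * (LINT \<omega>|M. (\<lambda>x y. y - \<alpha>) (X 0 \<omega>) (Y 0 \<omega>))"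
    by (rule Ef_scale) (simp add: fK_def gK_def wf_def power2_eq_square power3_eq_cube power4_eq_xxxx field_simps)
  thus ?thesis by (simp add: \<mu>4_def \<sigma>2_def U3_def pp_def bb_def cc_def AA_def EU0 prob_space)
qed

lemma egK_k[simp]: "EE (gK (Inr k)) = (1) * bb k"
proof -
  have "EE (gK (Inr k)) = (1) * (LINT \<omega>|M. (\<lambda>x y. y * x $ k) (X 0 \<omega>) (Y 0 \<omega>))"
    by (rule Ef_scale) (simp add: fK_def gK_def wf_def power2_eq_square power3_eq_cube power4_eq_xxxx field_simps)
  thus ?thesis by (simp add: \<mu>4_def \<sigma>2_def U3_def pp_def bb_def cc_def AA_def EU0 prob_space)
qed

lemma eW[simp]: "EE (wf k) = (1) * bb k"
proof -
  have "EE (wf k) = (1) * (LINT \<omega>|M. (\<lambda>x y. y * x $ k) (X 0 \<omega>) (Y 0 \<omega>))"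
    by (rule Ef_scale) (simp add: fK_def gK_def wf_def power2_eq_square power3_eq_cube power4_eq_xxxx field_simps)
  thus ?thesis by (simp add: \<mu>4_def \<sigma>2_def U3_def pp_def bb_def cc_def AA_def EU0 prob_space)
qed

lemma eWW[simp]: "EE (\<lambda>a. wf j a * wf k a) = (1) * AA j k"
proof -
  have "EE (\<lambda>a. wf j a * wf k a) = (1) * (LINT \<omega>|M. (\<lambda>x y. (y * x $ j) * (y * x $ k)) (X 0 \<omega>) (Y 0 \<omega>))"
    by (rule Ef_scale) (simp add: fK_def gK_def wf_def power2_eq_square power3_eq_cube power4_eq_xxxx field_simps)
  thus ?thesis by (simp add: \<mu>4_def \<sigma>2_def U3_def pp_def bb_def cc_def AA_def EU0 prob_space)
qed

definition "Tt = (\<Sum>j\<in>UNIV. (bb j)\<^sup>2)"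
definition "Pb = (\<Sum>j\<in>UNIV. pp j * bb j)"
definition "Cc = (\<Sum>j\<in>UNIV. (cc j)\<^sup>2)"
definition "Qq = (\<Sum>j\<in>UNIV. bb j * (\<Sum>k\<in>UNIV. AA j k * bb k))"
definition "Ff = (\<Sum>j\<in>UNIV. \<Sum>k\<in>UNIV. (AA j k)\<^sup>2)"

lemma mu1: "ustat.mu M (\<lambda>i \<omega>. (X i \<omega>, Y i \<omega>)) RR fK gK = \<sigma>2 - Tt"
  unfolding ustat.mu_def[OF K1_ustat] sumR
  by (simp add: Tt_def power2_eq_square sum_negf)

lemma m1_1: "ustat.m1 M (\<lambda>i \<omega>. (X i \<omega>, Y i \<omega>)) RR fK gK = \<mu>4/4 + 3*\<sigma>2\<^sup>2/4 - Pb - Tt*\<sigma>2 + Qq"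
  unfolding ustat.m1_def[OF K1_ustat] sumR
  apply (simp add: sum.distrib)
  apply (simp add: Pb_def Tt_def Qq_def Cc_def Ff_def sum_negf sum_subtractf sum.distrib sum_divide_distrib[symmetric] sum_distrib_left sum_distrib_right power2_eq_square algebra_simps)
  done

lemma m2_1: "ustat.m2 M (\<lambda>i \<omega>. (X i \<omega>, Y i \<omega>)) RR fK gK = \<mu>4/2 + 3*\<sigma>2\<^sup>2/2 - 2*Pb + 2*Cc + Ff"
  unfolding ustat.m2_def[OF K1_ustat] sumR
  apply (simp add: sum.distrib)
  apply (simp add: Pb_def Tt_def Qq_def Cc_def Ff_def sum_negf sum_subtractf sum.distrib sum_divide_distrib[symmetric] sum_distrib_left sum_distrib_right power2_eq_square algebra_simps)
  apply (simp add: sum_distrib_left[symmetric])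
  done

lemma mu2: "ustat.mu M (\<lambda>i \<omega>. (X i \<omega>, Y i \<omega>)) UNIV wf wf = Tt"
  unfolding ustat.mu_def[OF K2_ustat] by (simp add: Tt_def power2_eq_square)
lemma m1_2: "ustat.m1 M (\<lambda>i \<omega>. (X i \<omega>, Y i \<omega>)) UNIV wf wf = Qq"
  unfolding ustat.m1_def[OF K2_ustat] by (simp add: Qq_def sum_distrib_left algebra_simps)
lemma m2_2: "ustat.m2 M (\<lambda>i \<omega>. (X i \<omega>, Y i \<omega>)) UNIV wf wf = Ff"
  unfolding ustat.m2_def[OF K2_ustat] by (simp add: Ff_def power2_eq_square)

end

context spec begin

lemma K2_S: "ustat.S (\<lambda>i \<omega>. (X i \<omega>, Y i \<omega>)) n UNIV wf wf \<omega> =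
   2 * (\<Sum>i2<n. \<Sum>i1<i2. (Y i1 \<omega> *\<^sub>R X i1 \<omega>) \<bullet> (Y i2 \<omega> *\<^sub>R X i2 \<omega>))"
proof -
  have "ustat.S (\<lambda>i \<omega>. (X i \<omega>, Y i \<omega>)) n UNIV wf wf \<omega> =
     (\<Sum>i<n. \<Sum>j\<in>{..<n}-{i}. (Y i \<omega> *\<^sub>R X i \<omega>) \<bullet> (Y j \<omega> *\<^sub>R X j \<omega>))"
    by (simp add: ustat.S_def[OF K2_ustat] ustat.K_def[OF K2_ustat] wf_def inner_vec_def)
  also have "\<dots> = 2 * (\<Sum>j<n. \<Sum>i<j. (Y i \<omega> *\<^sub>R X i \<omega>) \<bullet> (Y j \<omega> *\<^sub>R X j \<omega>))"
    by (rule sym_sum2) (simp add: inner_commute)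
  finally show ?thesis .
qed

lemma tau_eq: "tau_hat_sq n X Y = (\<lambda>\<omega>. ustat.S (\<lambda>i \<omega>. (X i \<omega>, Y i \<omega>)) n UNIV wf wf \<omega> / (real n * (real n - 1)))"
proof
  fix \<omega>
  have "real n * (real n - 1) \<noteq> 0" using nn by simp
  thus "tau_hat_sq n X Y \<omega> = ustat.S (\<lambda>i \<omega>. (X i \<omega>, Y i \<omega>)) n UNIV wf wf \<omega> / (real n * (real n - 1))"
    unfolding tau_hat_sq_def K2_S choose2_real by (simp add: field_simps)
qed

lemma K1_K: "ustat.K RR fK gK a b = ((snd a - \<alpha>)\<^sup>2/2 + (snd b - \<alpha>)\<^sup>2/2 - (snd a - \<alpha>)*(snd b - \<alpha>)) - (\<Sum>p\<in>UNIV. wf p a * wf p b)"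
  unfolding ustat.K_def[OF K1_ustat] sumR by (simp add: fK_def gK_def wf_def sum_negf) (simp add: algebra_simps)

lemma diff_eq: "(\<lambda>\<omega>. sigmaY_hat_sq n Y \<omega> - tau_hat_sq n X Y \<omega>) =
   (\<lambda>\<omega>. ustat.S (\<lambda>i \<omega>. (X i \<omega>, Y i \<omega>)) n RR fK gK \<omega> / (real n * (real n - 1)))"
proof
  fix \<omega>
  have n0: "real n * (real n - 1) \<noteq> 0" "real n - 1 \<noteq> 0" using nn by auto
  have "ustat.S (\<lambda>i \<omega>. (X i \<omega>, Y i \<omega>)) n RR fK gK \<omega> =
     (\<Sum>i<n. \<Sum>j\<in>{..<n}-{i}. (Y i \<omega> - \<alpha>)\<^sup>2/2 + (Y j \<omega> - \<alpha>)\<^sup>2/2 - (Y i \<omega> - \<alpha>)*(Y j \<omega> - \<alpha>))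
     - ustat.S (\<lambda>i \<omega>. (X i \<omega>, Y i \<omega>)) n UNIV wf wf \<omega>"
    unfolding ustat.S_def[OF K1_ustat] ustat.S_def[OF K2_ustat] ustat.K_def[OF K2_ustat] K1_K
    by (simp add: sum_subtractf)
  also have "(\<Sum>i<n. \<Sum>j\<in>{..<n}-{i}. (Y i \<omega> - \<alpha>)\<^sup>2/2 + (Y j \<omega> - \<alpha>)\<^sup>2/2 - (Y i \<omega> - \<alpha>)*(Y j \<omega> - \<alpha>))
     = real n * (\<Sum>i<n. (Y i \<omega> - (\<Sum>k<n. Y k \<omega>)/real n)\<^sup>2)"
    by (rule var_sum) (use nn in auto)
  finally have e: "ustat.S (\<lambda>i \<omega>. (X i \<omega>, Y i \<omega>)) n RR fK gK \<omega> = real n * (\<Sum>i<n. (Y i \<omega> - (\<Sum>k<n. Y k \<omega>)/real n)\<^sup>2) - ustat.S (\<lambda>i \<omega>. (X i \<omega>, Y i \<omega>)) n UNIV wf wf \<omega>" .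
  define SS where "SS = (\<Sum>i<n. (Y i \<omega> - (\<Sum>k<n. Y k \<omega>)/real n)\<^sup>2)"
  define S2 where "S2 = ustat.S (\<lambda>i \<omega>. (X i \<omega>, Y i \<omega>)) n UNIV wf wf \<omega>"
  have a: "sigmaY_hat_sq n Y \<omega> = SS / (real n - 1)" unfolding sigmaY_hat_sq_def SS_def ..
  have b: "tau_hat_sq n X Y \<omega> = S2 / (real n * (real n - 1))" unfolding S2_def tau_eq ..
  show "sigmaY_hat_sq n Y \<omega> - tau_hat_sq n X Y \<omega> = ustat.S (\<lambda>i \<omega>. (X i \<omega>, Y i \<omega>)) n RR fK gK \<omega> / (real n * (real n - 1))"
    unfolding e a b SS_def[symmetric] S2_def[symmetric] diff_divide_distrib using nn by simp
qed

end

context spec begin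

lemma V1: "var M (\<lambda>\<omega>. sigmaY_hat_sq n Y \<omega> - tau_hat_sq n X Y \<omega>) =
  (2*((\<mu>4/2 + 3*\<sigma>2\<^sup>2/2 - 2*Pb + 2*Cc + Ff) - (\<sigma>2 - Tt)*(\<sigma>2 - Tt)) + 4*(real n - 2)*((\<mu>4/4 + 3*\<sigma>2\<^sup>2/4 - Pb - Tt*\<sigma>2 + Qq) - (\<sigma>2 - Tt)*(\<sigma>2 - Tt))) / (real n * (real n - 1))"
  unfolding diff_eq ustat.ustat_var[OF K1_ustat] mu1 m1_1 m2_1 ..

lemma V2: "var M (tau_hat_sq n X Y) =
  (2*(Ff - Tt*Tt) + 4*(real n - 2)*(Qq - Tt*Tt)) / (real n * (real n - 1))"
  unfolding tau_eq ustat.ustat_var[OF K2_ustat] mu2 m1_2 m2_2 ..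

lemma main:
  "var M (\<lambda>\<omega>. sigmaY_hat_sq n Y \<omega> - tau_hat_sq n X Y \<omega>) =
          (\<mu>4 / real n - (real n - 3) / (real n * (real n - 1)) * \<sigma>2\<^sup>2)
          + var M (tau_hat_sq n X Y)
          - 4 / real n * (Pb - Tt * \<sigma>2)
          + 4 / (real n * (real n - 1)) * Cc
   \<and> var M (tau_hat_sq n X Y) =
          4 * (real n - 2) / (real n * (real n - 1)) * (Qq - Tt\<^sup>2)
          + 2 / (real n * (real n - 1)) * (Ff - Tt\<^sup>2)"
proof -
  define N where "N = real n"
  define D where "D = N * (N - 1)"
  have n0: "N \<noteq> 0" "N - 1 \<noteq> 0" using nn unfolding N_def by auto
  have D0: "D \<noteq> 0" using n0 unfolding D_def by simp
  have h1: "\<mu>4 / N = (N - 1) * \<mu>4 / D" using n0 unfolding D_def by (simp add: field_simps)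
  have h2: "4 / N * (Pb - Tt * \<sigma>2) = 4 * (N - 1) * (Pb - Tt * \<sigma>2) / D" using n0 unfolding D_def by (simp add: field_simps)
  have e2: "var M (tau_hat_sq n X Y) =
          4 * (real n - 2) / (real n * (real n - 1)) * (Qq - Tt\<^sup>2)
          + 2 / (real n * (real n - 1)) * (Ff - Tt\<^sup>2)"
    unfolding V2 N_def[symmetric] D_def[symmetric] using D0 by (simp add: field_simps power2_eq_square)
  have e1: "var M (\<lambda>\<omega>. sigmaY_hat_sq n Y \<omega> - tau_hat_sq n X Y \<omega>) =
          (\<mu>4 / real n - (real n - 3) / (real n * (real n - 1)) * \<sigma>2\<^sup>2)
          + var M (tau_hat_sq n X Y)
          - 4 / real n * (Pb - Tt * \<sigma>2)
          + 4 / (real n * (real n - 1)) * Cc"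
    unfolding V1 V2 N_def[symmetric] D_def[symmetric] h1 h2 using D0
    by (simp add: field_simps power2_eq_square)
  show ?thesis using e1 e2 by blast
qed

end

theorem proposition3:
  fixes M :: "'a measure" and X :: "nat \<Rightarrow> 'a \<Rightarrow> real^'p::finite"
    and Y :: "nat \<Rightarrow> 'a \<Rightarrow> real" and n :: nat
  assumes "prob_space M"
    and "n \<ge> 2"
    and meas: "\<And>i. i < n \<Longrightarrow> (\<lambda>\<omega>. (X i \<omega>, Y i \<omega>)) \<in> borel_measurable M"
    and indep: "prob_space.indep_vars M (\<lambda>_. borel) (\<lambda>i \<omega>. (X i \<omega>, Y i \<omega>)) {..<n}"
    and ident: "\<And>i. i < n \<Longrightarrow>
       distr M borel (\<lambda>\<omega>. (X i \<omega>, Y i \<omega>)) = distr M borel (\<lambda>\<omega>. (X 0 \<omega>, Y 0 \<omega>))"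
    and int_X2: "integrable M (\<lambda>\<omega>. (norm (X 0 \<omega>))\<^sup>2)"
    and int_Y4: "integrable M (\<lambda>\<omega>. (Y 0 \<omega>) ^ 4)"
    and int_W2: "integrable M (\<lambda>\<omega>. (norm (Y 0 \<omega> *\<^sub>R X 0 \<omega>))\<^sup>2)"
    and mean_X: "(LINT \<omega>|M. X 0 \<omega>) = 0"
    and var_X: "\<And>j k. (LINT \<omega>|M. X 0 \<omega> $ j * X 0 \<omega> $ k) = (if j = k then 1 else 0)"
  shows
    "let \<alpha> = (LINT \<omega>|M. Y 0 \<omega>);
         \<sigma>Y2 = (LINT \<omega>|M. (Y 0 \<omega> - \<alpha>)\<^sup>2);
         \<beta> = (LINT \<omega>|M. Y 0 \<omega> *\<^sub>R X 0 \<omega>);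
         \<tau>2 = (norm \<beta>)\<^sup>2;
         A = (\<chi> j k. LINT \<omega>|M. (Y 0 \<omega> * X 0 \<omega> $ j) * (Y 0 \<omega> * X 0 \<omega> $ k));
         \<mu>4 = (LINT \<omega>|M. (Y 0 \<omega> - \<alpha>) ^ 4);
         \<pi> = (\<chi> j. LINT \<omega>|M. (Y 0 \<omega> - \<alpha>)\<^sup>2 * (Y 0 \<omega> * X 0 \<omega> $ j));
         N = real n
     in var M (\<lambda>\<omega>. sigmaY_hat_sq n Y \<omega> - tau_hat_sq n X Y \<omega>) =
          (\<mu>4 / N - (N - 3) / (N * (N - 1)) * \<sigma>Y2\<^sup>2)
          + var M (tau_hat_sq n X Y)
          - 4 / N * (\<pi> \<bullet> \<beta> - \<tau>2 * \<sigma>Y2)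
          + 4 / (N * (N - 1)) *
              (\<Sum>j\<in>UNIV. (LINT \<omega>|M. (Y 0 \<omega> * X 0 \<omega> $ j) * (Y 0 \<omega> - \<alpha>))\<^sup>2)
      \<and> var M (tau_hat_sq n X Y) =
          4 * (N - 2) / (N * (N - 1)) * (\<beta> \<bullet> (A *v \<beta>) - (norm \<beta>) ^ 4)
          + 2 / (N * (N - 1)) * ((frob_norm A)\<^sup>2 - (norm \<beta>) ^ 4)"
proof -
  interpret spec M X Y n
    by (intro spec.intro spec_axioms.intro assms)
  have m: "(\<lambda>\<omega>. Y 0 \<omega> *\<^sub>R X 0 \<omega>) \<in> borel_measurable M" using Xm Ym by measurable
  have "integrable M (\<lambda>\<omega>. norm (Y 0 \<omega> *\<^sub>R X 0 \<omega>))"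
    by (rule sq_int[OF _ int_W2]) (use m in measurable)
  hence intW: "integrable M (\<lambda>\<omega>. Y 0 \<omega> *\<^sub>R X 0 \<omega>)" using integrable_norm_iff[OF m] by simp
  define \<beta> where "\<beta> = (LINT \<omega>|M. Y 0 \<omega> *\<^sub>R X 0 \<omega>)"
  have beta: "\<beta> $ j = bb j" for j
  proof -
    have "\<beta> $ j = \<beta> \<bullet> axis j 1" by (simp add: inner_axis)
    also have "\<dots> = (LINT \<omega>|M. (Y 0 \<omega> *\<^sub>R X 0 \<omega>) \<bullet> axis j 1)"
      unfolding \<beta>_def by (rule integral_inner_left[symmetric]) (use intW in auto)
    also have "\<dots> = bb j" by (simp add: bb_def inner_axis)
    finally show ?thesis .
  qed
  have nb2: "(norm \<beta>)\<^sup>2 = Tt"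
    unfolding power2_norm_eq_inner by (simp add: inner_vec_def beta Tt_def power2_eq_square)
  have nb4: "(norm \<beta>) ^ 4 = Tt\<^sup>2"
  proof -
    have "(norm \<beta>) ^ 4 = (norm \<beta>) ^ (2*2)" by simp
    also have "\<dots> = ((norm \<beta>)\<^sup>2)\<^sup>2" by (rule power_mult)
    finally show ?thesis using nb2 by simp
  qed
  have pib: "(\<chi> j. LINT \<omega>|M. (Y 0 \<omega> - \<alpha>)\<^sup>2 * (Y 0 \<omega> * X 0 \<omega> $ j)) \<bullet> \<beta> = Pb"
    by (simp add: inner_vec_def beta pp_def Pb_def)
  have Av: "\<beta> \<bullet> ((\<chi> j k. LINT \<omega>|M. (Y 0 \<omega> * X 0 \<omega> $ j) * (Y 0 \<omega> * X 0 \<omega> $ k)) *v \<beta>) = Qq"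
    by (simp add: inner_vec_def matrix_vector_mult_def beta AA_def Qq_def)
  have fr: "(frob_norm (\<chi> j k. LINT \<omega>|M. (Y 0 \<omega> * X 0 \<omega> $ j) * (Y 0 \<omega> * X 0 \<omega> $ k)))\<^sup>2 = Ff"
    by (simp add: frob_norm_def Ff_def AA_def sum_nonneg)
  have cs: "(\<Sum>j\<in>UNIV. (LINT \<omega>|M. (Y 0 \<omega> * X 0 \<omega> $ j) * (Y 0 \<omega> - \<alpha>))\<^sup>2) = Cc"
    by (simp add: Cc_def cc_def)
  show ?thesis
    unfolding Let_def \<alpha>_def[symmetric] \<sigma>2_def[symmetric] \<mu>4_def[symmetric] \<beta>_def[symmetric]
      pib nb2 nb4 Av fr cs
    by (rule main)
qed


end
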